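(* Let $L$ be a cosimplicial group, $b\in Z^1(L)$, and $h_b\colon F\to L$ the cosimplicial morphism with $h_b^1(a_1)=b$. Then the square \[\begin{array}{ccc}F&\xrightarrow{\iota_+}&F^+\\ {\scriptstyle h_b}\downarrow&&\downarrow{\scriptstyle \mathrm{Id}*h_b}\\ L&\xrightarrow{\iota_b}&L^b\end{array}\] is a pushout in the category of cosimplicial groups.
   Context: $F$ is the cosimplicial group with $F_n$ free on $a_1,\dots,a_n$, cofaces $d^0(a_j)=a_{j+1}$; for $1\le i\le n-1$, $d^i(a_j)=a_j$ ($j<i$), $d^i(a_i)=a_ia_{i+1}$, $d^i(a_j)=a_{j+1}$ ($j>i$); $d^n(a_j)=a_j$; codegeneracies $s^i(a_j)=a_j$ ($j\le i$), $s^i(a_{i+1})=e$, $s^i(a_j)=a_{j-1}$ ($j>i+1$). $Z^1(L)=\{b\in L_1: d^2(b)d^0(b)=d^1(b)\}$; cosimplicial morphisms $F\to L$ correspond bijectively to $Z^1(L)$ via $h\mapsto h^1(a_1)$. Construction of $L^b$ for $b\in Z^1(L)$: let $\overline F_0$ be the infinite cyclic group on $a_0$; put $b_1=b$, $b_{n+1}=d^{n+1}(b_n)$. Then $L^b_n=\overline F_0*L_n$ (free product), codegeneracies $s^i_b=\mathrm{Id}*s^i$, cofaces $d^i_b=\mathrm{Id}*d^i$ for $i>0$, and $d^0_b\colon L^b_{n-1}\to L^b_n$ is $d^0$ on $L_{n-1}$ and sends $a_0\mapsto a_0b_n$. $\iota_b\colon L\hookrightarrow L^b$ is induced by the inclusions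 $L_n\hookrightarrow\overline F_0*L_n$. $F^+:=F^{a_1}$ (note $a_1\in Z^1(F)$), with $\iota_+:=\iota_{a_1}$; $\mathrm{Id}*h_b\colon F^+\to L^b$ is the identity on $\overline F_0$ and $h_b$ on $F_n$. *)

theory Defs
  imports "HOL-Algebra.Group"
begin

text \<open>A letter (g, True) stands for the generator g, (g, False) for its inverse.\<close>

fun fg_red :: "('g \<times> bool) list \<Rightarrow> ('g \<times> bool) list" where
  "fg_red [] = []"
| "fg_red (x # xs) = (case fg_red xs of
       [] \<Rightarrow> [x]
     | y # ys \<Rightarrow> (if fst y = fst x \<and> snd y \<noteq> snd x then ys else x # y # ys))"

definition free_group :: "'g set \<Rightarrow> ('g \<times> bool) list monoid" where
  "free_group S = \<lparr>carrier = {w. set w \<subseteq> S \<times> UNIV \<and> fg_red w = w},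
                    monoid.mult = (\<lambda>x y. fg_red (x @ y)), one = []\<rparr>"

definition gen :: "'g \<Rightarrow> ('g \<times> bool) list" where
  "gen g = [(g, True)]"

definition free_lift :: "('a, 'm) monoid_scheme \<Rightarrow> ('g \<Rightarrow> 'a) \<Rightarrow> ('g \<times> bool) list \<Rightarrow> 'a" where
  "free_lift G \<phi> w = foldr (\<lambda>(g, e) acc. (if e then \<phi> g else inv\<^bsub>G\<^esub> (\<phi> g)) \<otimes>\<^bsub>G\<^esub> acc) w \<one>\<^bsub>G\<^esub>"

fun fp_merge :: "('a, 'm) monoid_scheme \<Rightarrow> ('b, 'n) monoid_scheme \<Rightarrow> ('a + 'b) \<Rightarrow> ('a + 'b) list \<Rightarrow> ('a + 'b) list" where
  "fp_merge G H (Inl g) [] = (if g = \<one>\<^bsub>G\<^esub> then [] else [Inl g])"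
| "fp_merge G H (Inr h) [] = (if h = \<one>\<^bsub>H\<^esub> then [] else [Inr h])"
| "fp_merge G H (Inl g) (Inl g' # ys) =
     (if g = \<one>\<^bsub>G\<^esub> then Inl g' # ys
      else if g \<otimes>\<^bsub>G\<^esub> g' = \<one>\<^bsub>G\<^esub> then ys else Inl (g \<otimes>\<^bsub>G\<^esub> g') # ys)"
| "fp_merge G H (Inr h) (Inr h' # ys) =
     (if h = \<one>\<^bsub>H\<^esub> then Inr h' # ys
      else if h \<otimes>\<^bsub>H\<^esub> h' = \<one>\<^bsub>H\<^esub> then ys else Inr (h \<otimes>\<^bsub>H\<^esub> h') # ys)"
| "fp_merge G H (Inl g) (Inr h' # ys) =
     (if g = \<one>\<^bsub>G\<^esub> then Inr h' # ys else Inl g # Inr h' # ys)"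
| "fp_merge G H (Inr h) (Inl g' # ys) =
     (if h = \<one>\<^bsub>H\<^esub> then Inl g' # ys else Inr h # Inl g' # ys)"

fun fp_red :: "('a, 'm) monoid_scheme \<Rightarrow> ('b, 'n) monoid_scheme \<Rightarrow> ('a + 'b) list \<Rightarrow> ('a + 'b) list" where
  "fp_red G H [] = []"
| "fp_red G H (x # xs) = fp_merge G H x (fp_red G H xs)"

definition free_prod :: "('a, 'm) monoid_scheme \<Rightarrow> ('b, 'n) monoid_scheme \<Rightarrow> ('a + 'b) list monoid" where
  "free_prod G H = \<lparr>carrier = {w. set w \<subseteq> Inl ` carrier G \<union> Inr ` carrier H \<and> fp_red G H w = w},
                    monoid.mult = (\<lambda>x y. fp_red G H (x @ y)), one = []\<rparr>"

definition fp_inl :: "('a, 'm) monoid_scheme \<Rightarrow> ('b, 'n) monoid_scheme \<Rightarrow> 'a \<Rightarrow> ('a + 'b) list" where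
  "fp_inl G H g = fp_red G H [Inl g]"

definition fp_inr :: "('a, 'm) monoid_scheme \<Rightarrow> ('b, 'n) monoid_scheme \<Rightarrow> 'b \<Rightarrow> ('a + 'b) list" where
  "fp_inr G H h = fp_red G H [Inr h]"

definition fp_lift :: "('c, 'm) monoid_scheme \<Rightarrow> ('a \<Rightarrow> 'c) \<Rightarrow> ('b \<Rightarrow> 'c) \<Rightarrow> ('a + 'b) list \<Rightarrow> 'c" where
  "fp_lift K \<phi> \<psi> w = foldr (\<lambda>x acc. (case x of Inl g \<Rightarrow> \<phi> g | Inr h \<Rightarrow> \<psi> h) \<otimes>\<^bsub>K\<^esub> acc) w \<one>\<^bsub>K\<^esub>"

text \<open>obj n is the group in cosimplicial degree n; coface n i : obj n \<rightarrow> obj (n+1)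
  is d^i (0 \<le> i \<le> n+1); codeg n i : obj (n+1) \<rightarrow> obj n is s^i (0 \<le> i \<le> n).\<close>
record 'a cosimp =
  obj :: "nat \<Rightarrow> 'a monoid"
  coface :: "nat \<Rightarrow> nat \<Rightarrow> 'a \<Rightarrow> 'a"
  codeg :: "nat \<Rightarrow> nat \<Rightarrow> 'a \<Rightarrow> 'a"

definition cosimp_group :: "'a cosimp \<Rightarrow> bool" where
  "cosimp_group X \<longleftrightarrow>
     (\<forall>n. group (obj X n)) \<and>
     (\<forall>n i. i \<le> Suc n \<longrightarrow> coface X n i \<in> hom (obj X n) (obj X (Suc n))) \<and>
     (\<forall>n i. i \<le> n \<longrightarrow> codeg X n i \<in> hom (obj X (Suc n)) (obj X n)) \<and>
     \<comment> \<open>d^j d^i = d^i d^(j-1) for i < j\<close>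
     (\<forall>n i j x. i < j \<and> j \<le> Suc (Suc n) \<and> x \<in> carrier (obj X n) \<longrightarrow>
        coface X (Suc n) j (coface X n i x) = coface X (Suc n) i (coface X n (j - 1) x)) \<and>
     \<comment> \<open>s^j d^i = d^i s^(j-1) for i < j\<close>
     (\<forall>n i j x. i < j \<and> j \<le> Suc n \<and> x \<in> carrier (obj X (Suc n)) \<longrightarrow>
        codeg X (Suc n) j (coface X (Suc n) i x) = coface X n i (codeg X n (j - 1) x)) \<and>
     \<comment> \<open>s^j d^j = id = s^j d^(j+1)\<close>
     (\<forall>n j x. j \<le> n \<and> x \<in> carrier (obj X n) \<longrightarrow>
        codeg X n j (coface X n j x) = x \<and> codeg X n j (coface X n (Suc j) x) = x) \<and>
     \<comment> \<open>s^j d^i = d^(i-1) s^j for i > j+1\<close>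
     (\<forall>n i j x. Suc j < i \<and> i \<le> Suc (Suc n) \<and> x \<in> carrier (obj X (Suc n)) \<longrightarrow>
        codeg X (Suc n) j (coface X (Suc n) i x) = coface X n (i - 1) (codeg X n j x)) \<and>
     \<comment> \<open>s^j s^i = s^i s^(j+1) for i \<le> j\<close>
     (\<forall>n i j x. i \<le> j \<and> j \<le> n \<and> x \<in> carrier (obj X (Suc (Suc n))) \<longrightarrow>
        codeg X n j (codeg X (Suc n) i x) = codeg X n i (codeg X (Suc n) (Suc j) x))"

definition cosimp_hom :: "'a cosimp \<Rightarrow> 'b cosimp \<Rightarrow> (nat \<Rightarrow> 'a \<Rightarrow> 'b) \<Rightarrow> bool" where
  "cosimp_hom X Y f \<longleftrightarrow>
     (\<forall>n. f n \<in> hom (obj X n) (obj Y n)) \<and>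
     (\<forall>n i x. i \<le> Suc n \<and> x \<in> carrier (obj X n) \<longrightarrow>
        f (Suc n) (coface X n i x) = coface Y n i (f n x)) \<and>
     (\<forall>n i x. i \<le> n \<and> x \<in> carrier (obj X (Suc n)) \<longrightarrow>
        f n (codeg X n i x) = codeg Y n i (f (Suc n) x))"

definition Z1 :: "'a cosimp \<Rightarrow> 'a set" where
  "Z1 L = {b \<in> carrier (obj L 1).
      coface L 1 2 b \<otimes>\<^bsub>obj L 2\<^esub> coface L 1 0 b = coface L 1 1 b}"

text \<open>F_n is free on a_1, ..., a_n (a_j = gen j).\<close>

definition F_coface_gen :: "nat \<Rightarrow> nat \<Rightarrow> nat \<Rightarrow> (nat \<times> bool) list" where
  "F_coface_gen n i j =
     (if i = 0 then gen (Suc j)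
      else if i \<le> n then
        (if j < i then gen j else if j = i then [(i, True), (Suc i, True)] else gen (Suc j))
      else gen j)"

definition F_codeg_gen :: "nat \<Rightarrow> nat \<Rightarrow> (nat \<times> bool) list" where
  "F_codeg_gen i j = (if j \<le> i then gen j else if j = Suc i then [] else gen (j - 1))"

definition Fcs :: "(nat \<times> bool) list cosimp" where
  "Fcs = \<lparr>obj = (\<lambda>n. free_group {1..n}),
          coface = (\<lambda>n i. free_lift (free_group {1..Suc n}) (F_coface_gen n i)),
          codeg = (\<lambda>n i. free_lift (free_group {1..n}) (F_codeg_gen i))\<rparr>"

text \<open>The infinite cyclic group on a_0.\<close>
definition Fbar0 :: "(nat \<times> bool) list monoid" where
  "Fbar0 = free_group {0}"

fun bseq :: "'a cosimp \<Rightarrow> 'a \<Rightarrow> nat \<Rightarrow> 'a" where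
  "bseq L b 0 = undefined"
| "bseq L b (Suc 0) = b"
| "bseq L b (Suc (Suc n)) = coface L (Suc n) (Suc (Suc n)) (bseq L b (Suc n))"

definition Lb_obj :: "'a cosimp \<Rightarrow> nat \<Rightarrow> ((nat \<times> bool) list + 'a) list monoid" where
  "Lb_obj L n = free_prod Fbar0 (obj L n)"

definition Lb :: "'a cosimp \<Rightarrow> 'a \<Rightarrow> ((nat \<times> bool) list + 'a) list cosimp" where
  "Lb L b = \<lparr>obj = Lb_obj L,
     coface = (\<lambda>n i. if i = 0 then
                 fp_lift (Lb_obj L (Suc n))
                   (free_lift (Lb_obj L (Suc n))
                      (\<lambda>_. fp_inl Fbar0 (obj L (Suc n)) (gen 0)
                           \<otimes>\<^bsub>Lb_obj L (Suc n)\<^esub> fp_inr Fbar0 (obj L (Suc n)) (bseq L b (Suc n))))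
                   (\<lambda>y. fp_inr Fbar0 (obj L (Suc n)) (coface L n 0 y))
               else
                 fp_lift (Lb_obj L (Suc n))
                   (fp_inl Fbar0 (obj L (Suc n)))
                   (\<lambda>y. fp_inr Fbar0 (obj L (Suc n)) (coface L n i y))),
     codeg = (\<lambda>n i. fp_lift (Lb_obj L n)
                   (fp_inl Fbar0 (obj L n))
                   (\<lambda>y. fp_inr Fbar0 (obj L n) (codeg L n i y)))\<rparr>"

definition iota :: "'a cosimp \<Rightarrow> nat \<Rightarrow> 'a \<Rightarrow> ((nat \<times> bool) list + 'a) list" where
  "iota L n = fp_inr Fbar0 (obj L n)"

text \<open>F^+ = F^(a_1), iota_+ = iota_(a_1).\<close>
definition Fplus :: "((nat \<times> bool) list + (nat \<times> bool) list) list cosimp" where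
  "Fplus = Lb Fcs (gen 1)"

definition iota_plus :: "nat \<Rightarrow> (nat \<times> bool) list \<Rightarrow> ((nat \<times> bool) list + (nat \<times> bool) list) list" where
  "iota_plus = iota Fcs"

definition idstar :: "'a cosimp \<Rightarrow> (nat \<Rightarrow> (nat \<times> bool) list \<Rightarrow> 'a) \<Rightarrow> nat
    \<Rightarrow> ((nat \<times> bool) list + (nat \<times> bool) list) list \<Rightarrow> ((nat \<times> bool) list + 'a) list" where
  "idstar L h n = fp_lift (Lb_obj L n) (fp_inl Fbar0 (obj L n)) (\<lambda>y. fp_inr Fbar0 (obj L n) (h n y))"

end

theory Submission
  imports Defs
begin

definition fgc :: "('g \<times> bool) \<Rightarrow> ('g \<times> bool) list \<Rightarrow> ('g \<times> bool) list" where
  "fgc x r = (case r of [] \<Rightarrow> [x] | y # ys \<Rightarrow> (if fst y = fst x \<and> snd y \<noteq> snd x then ys else x # y # ys))"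

lemma fg_red_Cons: "fg_red (x # xs) = fgc x (fg_red xs)"
  by (simp add: fgc_def split: list.splits)

declare fg_red.simps(2)[simp del]

definition finv :: "('g \<times> bool) \<Rightarrow> ('g \<times> bool)" where
  "finv x = (fst x, \<not> snd x)"

lemma length_fgc: "length (fgc x r) \<le> Suc (length r)"
  by (auto simp: fgc_def split: list.splits)

lemma length_fgc_eq: "length (fgc x r) = Suc (length r) \<Longrightarrow> fgc x r = x # r"
  by (auto simp: fgc_def split: list.splits if_splits)

lemma length_fg_red: "length (fg_red w) \<le> length w"
  by (induction w) (auto simp: fg_red_Cons intro: le_trans[OF length_fgc])

lemma fg_red_Cons_red:
  assumes "fg_red (y # ys) = y # ys"
  shows "fg_red ys = ys \<and> fgc y ys = y # ys"
proof -
  have 1: "fgc y (fg_red ys) = y # ys" using assms by (simp add: fg_red_Cons)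
  have "length (fgc y (fg_red ys)) \<le> Suc (length (fg_red ys))" by (rule length_fgc)
  with 1 length_fg_red[of ys] have "length (fgc y (fg_red ys)) = Suc (length (fg_red ys))" by simp
  from length_fgc_eq[OF this] 1 show ?thesis by simp
qed

lemma fgc_red: "fg_red r = r \<Longrightarrow> fg_red (fgc x r) = fgc x r"
proof (cases r)
  case Nil
  then show ?thesis by (simp add: fgc_def fg_red_Cons)
next
  case (Cons y ys)
  assume r: "fg_red r = r"
  show ?thesis
  proof (cases "fst y = fst x \<and> snd y \<noteq> snd x")
    case True
    then show ?thesis using Cons r fg_red_Cons_red[of y ys] by (simp add: fgc_def)
  next
    case False
    have "fgc x r = x # r" using False Cons by (simp add: fgc_def)
    moreover have "fg_red (x # r) = fgc x r" using r by (simp add: fg_red_Cons)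
    ultimately show ?thesis by simp
  qed
qed

lemma fg_red_idem [simp]: "fg_red (fg_red w) = fg_red w"
  by (induction w) (auto simp: fg_red_Cons fgc_red)

lemma fgc_fgc_inv:
  assumes "fg_red r = r"
  shows "fgc x (fgc (finv x) r) = r"
proof (cases r)
  case Nil
  then show ?thesis by (simp add: fgc_def finv_def)
next
  case (Cons y ys)
  show ?thesis
  proof (cases "y = x")
    case True
    with Cons assms fg_red_Cons_red[of y ys] show ?thesis
      by (simp add: fgc_def finv_def)
  next
    case False
    then show ?thesis using Cons by (cases x; cases y) (auto simp: fgc_def finv_def)
  qed
qed

lemma finv_finv [simp]: "finv (finv x) = x"
  by (simp add: finv_def)

lemma fg_red_append_red: "fg_red (xs @ ys) = fg_red (xs @ fg_red ys)"
  by (induction xs) (auto simp: fg_red_Cons)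

lemma fg_red_fgc_append: "fg_red (fgc x t @ ys) = fgc x (fg_red (t @ ys))"
proof (cases t)
  case Nil
  then show ?thesis by (simp add: fgc_def fg_red_Cons)
next
  case (Cons y t')
  show ?thesis
  proof (cases "fst y = fst x \<and> snd y \<noteq> snd x")
    case True
    then have "y = finv x" by (cases x; cases y) (auto simp: finv_def)
    have 1: "fgc x t = t'" using True Cons by (simp add: fgc_def)
    have "fgc x (fg_red (t @ ys)) = fgc x (fgc (finv x) (fg_red (t' @ ys)))"
      using Cons \<open>y = finv x\<close> by (simp add: fg_red_Cons)
    also have "\<dots> = fg_red (t' @ ys)" by (rule fgc_fgc_inv) simp
    finally show ?thesis using 1 by simp
  next
    case False
    have "fgc x t = x # t" using False Cons by (simp add: fgc_def)
    then show ?thesis using fg_red_Cons[of x "t @ ys"] by simp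
  qed
qed

lemma fg_red_red_append: "fg_red (fg_red xs @ ys) = fg_red (xs @ ys)"
  by (induction xs) (auto simp: fg_red_Cons fg_red_fgc_append)

lemma set_fgc: "set (fgc x r) \<subseteq> insert x (set r)"
  by (auto simp: fgc_def split: list.splits)

lemma set_fg_red: "set (fg_red w) \<subseteq> set w"
  by (induction w) (use set_fgc in \<open>fastforce simp: fg_red_Cons\<close>)+

lemma fg_red_inv: "fg_red (rev (map finv w) @ w) = []"
proof (induction w)
  case Nil
  then show ?case by simp
next
  case (Cons a w)
  have "fg_red (rev (map finv (a # w)) @ a # w) = fg_red (rev (map finv w) @ ([finv a, a] @ w))"
    by simp
  also have "\<dots> = fg_red (rev (map finv w) @ fg_red ([finv a, a] @ w))"
    by (rule fg_red_append_red)
  also have "fg_red ([finv a, a] @ w) = fg_red w"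
    by (simp add: fg_red_Cons fgc_fgc_inv[of "fg_red w" "finv a", simplified])
  also have "fg_red (rev (map finv w) @ fg_red w) = fg_red (rev (map finv w) @ w)"
    by (rule fg_red_append_red[symmetric])
  finally show ?case using Cons by simp
qed

lemma free_group_simps:
  "carrier (free_group S) = {w. set w \<subseteq> S \<times> UNIV \<and> fg_red w = w}"
  "x \<otimes>\<^bsub>free_group S\<^esub> y = fg_red (x @ y)"
  "\<one>\<^bsub>free_group S\<^esub> = []"
  by (simp_all add: free_group_def)

lemma group_free_group: "group (free_group S)"
proof (rule groupI)
  fix x y assume "x \<in> carrier (free_group S)" "y \<in> carrier (free_group S)"
  then show "x \<otimes>\<^bsub>free_group S\<^esub> y \<in> carrier (free_group S)"
    using set_fg_red[of "x @ y"] by (auto simp: free_group_simps)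
next
  show "\<one>\<^bsub>free_group S\<^esub> \<in> carrier (free_group S)" by (simp add: free_group_simps)
next
  fix x y z
  show "x \<otimes>\<^bsub>free_group S\<^esub> y \<otimes>\<^bsub>free_group S\<^esub> z = x \<otimes>\<^bsub>free_group S\<^esub> (y \<otimes>\<^bsub>free_group S\<^esub> z)"
  proof -
    have "fg_red (fg_red (x @ y) @ z) = fg_red (x @ y @ z)" by (simp add: fg_red_red_append)
    moreover have "fg_red (x @ fg_red (y @ z)) = fg_red (x @ y @ z)" by (rule fg_red_append_red[symmetric])
    ultimately show ?thesis by (simp add: free_group_simps)
  qed
next
  fix x assume "x \<in> carrier (free_group S)"
  then show "\<one>\<^bsub>free_group S\<^esub> \<otimes>\<^bsub>free_group S\<^esub> x = x" by (simp add: free_group_simps)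
next
  fix x assume x: "x \<in> carrier (free_group S)"
  show "\<exists>y\<in>carrier (free_group S). y \<otimes>\<^bsub>free_group S\<^esub> x = \<one>\<^bsub>free_group S\<^esub>"
  proof (intro bexI)
    show "fg_red (rev (map finv x)) \<otimes>\<^bsub>free_group S\<^esub> x = \<one>\<^bsub>free_group S\<^esub>"
      by (simp add: free_group_simps fg_red_red_append fg_red_inv)
    have "set (rev (map finv x)) \<subseteq> S \<times> UNIV" using x by (auto simp: free_group_simps finv_def)
    then show "fg_red (rev (map finv x)) \<in> carrier (free_group S)"
      using set_fg_red[of "rev (map finv x)"] by (auto simp: free_group_simps)
  qed
qed


definition lv :: "('a, 'm) monoid_scheme \<Rightarrow> ('g \<Rightarrow> 'a) \<Rightarrow> ('g \<times> bool) \<Rightarrow> 'a" where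
  "lv G \<phi> x = (if snd x then \<phi> (fst x) else inv\<^bsub>G\<^esub> (\<phi> (fst x)))"

lemma free_lift_Nil [simp]: "free_lift G \<phi> [] = \<one>\<^bsub>G\<^esub>"
  by (simp add: free_lift_def)

lemma free_lift_Cons: "free_lift G \<phi> (x # w) = lv G \<phi> x \<otimes>\<^bsub>G\<^esub> free_lift G \<phi> w"
  by (cases x) (simp add: free_lift_def lv_def)

context
  fixes G :: "('a, 'm) monoid_scheme" and \<phi> :: "'g \<Rightarrow> 'a" and S :: "'g set"
  assumes G: "group G" and phi: "\<And>g. g \<in> S \<Longrightarrow> \<phi> g \<in> carrier G"
begin

interpretation G: group G by (rule G)

lemma lv_closed: "fst x \<in> S \<Longrightarrow> lv G \<phi> x \<in> carrier G"
  using phi by (simp add: lv_def)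

lemma free_lift_closed: "set w \<subseteq> S \<times> UNIV \<Longrightarrow> free_lift G \<phi> w \<in> carrier G"
  by (induction w) (auto simp: free_lift_Cons lv_closed)

lemma free_lift_append:
  "set xs \<subseteq> S \<times> UNIV \<Longrightarrow> set ys \<subseteq> S \<times> UNIV \<Longrightarrow>
   free_lift G \<phi> (xs @ ys) = free_lift G \<phi> xs \<otimes>\<^bsub>G\<^esub> free_lift G \<phi> ys"
  by (induction xs) (auto simp: free_lift_Cons lv_closed free_lift_closed G.m_assoc)

lemma free_lift_fgc:
  assumes "fst x \<in> S" "set t \<subseteq> S \<times> UNIV"
  shows "free_lift G \<phi> (fgc x t) = lv G \<phi> x \<otimes>\<^bsub>G\<^esub> free_lift G \<phi> t"
proof (cases t)
  case Nil
  then show ?thesis using assms by (simp add: fgc_def free_lift_Cons)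
next
  case (Cons y ys)
  show ?thesis
  proof (cases "fst y = fst x \<and> snd y \<noteq> snd x")
    case True
    have ys: "set ys \<subseteq> S \<times> UNIV" using assms Cons by auto
    have "lv G \<phi> x \<otimes>\<^bsub>G\<^esub> lv G \<phi> y = \<one>\<^bsub>G\<^esub>"
      using True assms phi by (cases "snd x") (auto simp: lv_def)
    then have "lv G \<phi> x \<otimes>\<^bsub>G\<^esub> (lv G \<phi> y \<otimes>\<^bsub>G\<^esub> free_lift G \<phi> ys) = free_lift G \<phi> ys"
      using assms True Cons ys
      by (simp add: G.m_assoc[symmetric] lv_closed free_lift_closed)
    then show ?thesis using True Cons by (simp add: fgc_def free_lift_Cons)
  next
    case False
    have "fgc x t = x # t" using False Cons by (auto simp: fgc_def)
    then show ?thesis by (simp add: free_lift_Cons)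
  qed
qed

lemma free_lift_fg_red: "set w \<subseteq> S \<times> UNIV \<Longrightarrow> free_lift G \<phi> (fg_red w) = free_lift G \<phi> w"
proof (induction w)
  case Nil
  then show ?case by simp
next
  case (Cons a w)
  have "set (fg_red w) \<subseteq> S \<times> UNIV" using Cons set_fg_red[of w] by auto
  moreover have "fst a \<in> S" using Cons.prems by auto
  ultimately show ?case using Cons by (simp add: fg_red_Cons free_lift_fgc free_lift_Cons)
qed

lemma free_lift_hom: "free_lift G \<phi> \<in> hom (free_group S) G"
proof (rule homI)
  fix x assume "x \<in> carrier (free_group S)"
  then show "free_lift G \<phi> x \<in> carrier G" by (simp add: free_group_simps free_lift_closed)
next
  fix x y assume "x \<in> carrier (free_group S)" "y \<in> carrier (free_group S)"
  then show "free_lift G \<phi> (x \<otimes>\<^bsub>free_group S\<^esub> y) = free_lift G \<phi> x \<otimes>\<^bsub>G\<^esub> free_lift G \<phi> y"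
    by (simp add: free_group_simps free_lift_fg_red free_lift_append)
qed

lemma free_lift_gen: "g \<in> S \<Longrightarrow> free_lift G \<phi> (gen g) = \<phi> g"
  by (simp add: gen_def free_lift_Cons lv_def phi)

end

lemma gen_closed: "g \<in> S \<Longrightarrow> gen g \<in> carrier (free_group S)"
  by (simp add: gen_def free_group_simps fg_red_Cons fgc_def)

lemma hom_free_lift_eq:
  assumes G: "group G" and f: "f \<in> hom (free_group S) G" and w: "w \<in> carrier (free_group S)"
  shows "f w = free_lift G (\<lambda>g. f (gen g)) w"
  using w
proof (induction w)
  case Nil
  have "f \<one>\<^bsub>free_group S\<^esub> = \<one>\<^bsub>G\<^esub>" by (rule hom_one[OF f group_free_group G])
  then show ?case by (simp add: free_group_simps)
next
  case (Cons x w)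
  interpret G: group G by (rule G)
  interpret F: group "free_group S" by (rule group_free_group)
  interpret h: group_hom "free_group S" G f
    using f by (simp add: group_hom_def group_hom_axioms_def G group_free_group)
  have red: "fg_red (x # w) = x # w" and xS: "fst x \<in> S" and wS: "set w \<subseteq> S \<times> UNIV"
    using Cons.prems by (auto simp: free_group_simps)
  from fg_red_Cons_red[OF red] have wred: "fg_red w = w" and fx: "fgc x w = x # w" by auto
  have wc: "w \<in> carrier (free_group S)" using wred wS by (simp add: free_group_simps)
  have xc: "[x] \<in> carrier (free_group S)" using xS by (cases x) (simp add: free_group_simps fg_red_Cons fgc_def)
  have eq: "x # w = [x] \<otimes>\<^bsub>free_group S\<^esub> w"
    using fx wred by (simp add: free_group_simps fg_red_Cons)
  have gc: "gen (fst x) \<in> carrier (free_group S)" using xS by (rule gen_closed)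
  have fx1: "f [x] = lv G (\<lambda>g. f (gen g)) x"
  proof (cases "snd x")
    case True
    then have "[x] = gen (fst x)" by (cases x) (simp add: gen_def)
    then show ?thesis using True by (simp add: lv_def)
  next
    case False
    have "gen (fst x) \<otimes>\<^bsub>free_group S\<^esub> [x] = \<one>\<^bsub>free_group S\<^esub>"
      using False by (cases x) (simp add: gen_def free_group_simps fg_red_Cons fgc_def)
    then have "[x] = inv\<^bsub>free_group S\<^esub> (gen (fst x))"
      using F.inv_equality gc xc by (metis F.inv_unique' F.r_inv F.inv_closed F.m_assoc F.l_one F.r_one F.l_inv)
    then show ?thesis using False gc by (simp add: lv_def)
  qed
  have "f (x # w) = f [x] \<otimes>\<^bsub>G\<^esub> f w" using eq xc wc by simp
  also have "\<dots> = free_lift G (\<lambda>g. f (gen g)) (x # w)"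
    using fx1 Cons.IH[OF wc] by (simp add: free_lift_Cons)
  finally show ?case .
qed

lemma free_lift_cong: "(\<And>g. g \<in> fst ` set w \<Longrightarrow> \<phi> g = \<psi> g) \<Longrightarrow> free_lift G \<phi> w = free_lift G \<psi> w"
  by (induction w) (auto simp: free_lift_Cons lv_def)

lemma free_hom_unique:
  assumes G: "group G" and f: "f \<in> hom (free_group S) G" and f': "f' \<in> hom (free_group S) G"
    and eq: "\<And>g. g \<in> S \<Longrightarrow> f (gen g) = f' (gen g)" and w: "w \<in> carrier (free_group S)"
  shows "f w = f' w"
proof -
  have "free_lift G (\<lambda>g. f (gen g)) w = free_lift G (\<lambda>g. f' (gen g)) w"
    using w unfolding free_group_simps
    by (intro free_lift_cong) (auto simp: eq)
  then show ?thesis using hom_free_lift_eq[OF G f w] hom_free_lift_eq[OF G f' w] by simp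
qed


lemma length_fpm: "length (fp_merge G H x r) \<le> Suc (length r)"
  by (cases "(G, H, x, r)" rule: fp_merge.cases) auto

lemma length_fpm_eq: "length (fp_merge G H x r) = Suc (length r) \<Longrightarrow> fp_merge G H x r = x # r"
  by (cases "(G, H, x, r)" rule: fp_merge.cases) (auto split: if_splits)

lemma length_fp_red: "length (fp_red G H w) \<le> length w"
  by (induction w) (auto intro: le_trans[OF length_fpm])

lemma fp_red_Cons_red:
  assumes "fp_red G H (y # ys) = y # ys"
  shows "fp_red G H ys = ys \<and> fp_merge G H y ys = y # ys"
proof -
  have 1: "fp_merge G H y (fp_red G H ys) = y # ys" using assms by simp
  have "length (fp_merge G H y (fp_red G H ys)) \<le> Suc (length (fp_red G H ys))" by (rule length_fpm)
  with 1 length_fp_red[of G H ys]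
  have "length (fp_merge G H y (fp_red G H ys)) = Suc (length (fp_red G H ys))" by simp
  from length_fpm_eq[OF this] 1 show ?thesis by simp
qed

lemma fpm_Inl_eq: "fp_merge G H (Inl g) ys = Inl g # ys \<Longrightarrow> g \<noteq> \<one>\<^bsub>G\<^esub> \<and> (\<forall>g' ys'. ys \<noteq> Inl g' # ys')"
  by (cases "(G, H, Inl g :: 'a + 'b, ys)" rule: fp_merge.cases) (auto split: if_splits)

lemma fpm_Inr_eq: "fp_merge G H (Inr h) ys = Inr h # ys \<Longrightarrow> h \<noteq> \<one>\<^bsub>H\<^esub> \<and> (\<forall>h' ys'. ys \<noteq> Inr h' # ys')"
  by (cases "(G, H, Inr h :: 'a + 'b, ys)" rule: fp_merge.cases) (auto split: if_splits)

lemma fpm_red: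
  assumes r: "fp_red G H r = r"
  shows "fp_red G H (fp_merge G H x r) = fp_merge G H x r"
proof (cases r)
  case Nil
  then show ?thesis by (cases x) auto
next
  case (Cons y ys)
  from fp_red_Cons_red[of G H y ys] r Cons have ys: "fp_red G H ys = ys" "fp_merge G H y ys = y # ys" by auto
  show ?thesis
  proof (cases x; cases y)
    fix g g' assume x: "x = Inl g" and y: "y = Inl g'"
    from fpm_Inl_eq[OF ys(2)[unfolded y]] have "\<forall>g' ys'. ys \<noteq> Inl g' # ys'" by blast
    then have "fp_merge G H (Inl c) ys = (if c = \<one>\<^bsub>G\<^esub> then ys else Inl c # ys)" for c
      by (cases ys rule: list.exhaust; case_tac "ys"; auto split: sum.splits) (metis fp_merge.simps sum.exhaust list.exhaust)+
    then show ?thesis using x y Cons ys r by auto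
  next
    fix g h' assume x: "x = Inl g" and y: "y = Inr h'"
    show ?thesis using x y Cons r by auto
  next
    fix h g' assume x: "x = Inr h" and y: "y = Inl g'"
    show ?thesis using x y Cons r by auto
  next
    fix h h' assume x: "x = Inr h" and y: "y = Inr h'"
    from fpm_Inr_eq[OF ys(2)[unfolded y]] have "\<forall>h' ys'. ys \<noteq> Inr h' # ys'" by blast
    then have "fp_merge G H (Inr c) ys = (if c = \<one>\<^bsub>H\<^esub> then ys else Inr c # ys)" for c
      by (cases ys rule: list.exhaust; case_tac "ys"; auto split: sum.splits) (metis fp_merge.simps sum.exhaust list.exhaust)+
    then show ?thesis using x y Cons ys r by auto
  qed
qed

lemma fp_red_idem [simp]: "fp_red G H (fp_red G H w) = fp_red G H w"
  by (induction w) (auto simp: fpm_red)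

lemma fp_red_append_red: "fp_red G H (xs @ ys) = fp_red G H (xs @ fp_red G H ys)"
  by (induction xs) auto

lemma fpm_one_l: "fp_merge G H (Inl \<one>\<^bsub>G\<^esub>) r = r"
  by (cases "(G, H, Inl \<one>\<^bsub>G\<^esub> :: 'a + 'b, r)" rule: fp_merge.cases) auto

lemma fpm_one_r: "fp_merge G H (Inr \<one>\<^bsub>H\<^esub>) r = r"
  by (cases "(G, H, Inr \<one>\<^bsub>H\<^esub> :: 'a + 'b, r)" rule: fp_merge.cases) auto


definition inC :: "('a, 'm) monoid_scheme \<Rightarrow> ('b, 'n) monoid_scheme \<Rightarrow> ('a + 'b) list \<Rightarrow> bool" where
  "inC G H w \<longleftrightarrow> set w \<subseteq> Inl ` carrier G \<union> Inr ` carrier H"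

lemma inC_simps [simp]:
  "inC G H []"
  "inC G H (Inl g # w) \<longleftrightarrow> g \<in> carrier G \<and> inC G H w"
  "inC G H (Inr h # w) \<longleftrightarrow> h \<in> carrier H \<and> inC G H w"
  "inC G H (xs @ ys) \<longleftrightarrow> inC G H xs \<and> inC G H ys"
  by (auto simp: inC_def)

lemma inC_rev [simp]: "inC G H (rev w) = inC G H w"
  by (simp add: inC_def)

context
  fixes G :: "('a, 'm) monoid_scheme" and H :: "('b, 'n) monoid_scheme"
  assumes G: "group G" and H: "group H"
begin

interpretation G: group G by (rule G)
interpretation H: group H by (rule H)

lemma K2l:
  assumes g: "g \<in> carrier G" and g': "g' \<in> carrier G" and r: "fp_red G H r = r" and rc: "inC G H r"
  shows "fp_merge G H (Inl g) (fp_merge G H (Inl g') r) = fp_merge G H (Inl (g \<otimes>\<^bsub>G\<^esub> g')) r"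
proof (cases r)
  case Nil
  then show ?thesis using g g' by auto
next
  case (Cons y ys)
  from fp_red_Cons_red[of G H y ys] r Cons have ys: "fp_red G H ys = ys" "fp_merge G H y ys = y # ys" by auto
  show ?thesis
  proof (cases y)
    case (Inl g'')
    from fpm_Inl_eq[OF ys(2)[unfolded Inl]] have ne: "g'' \<noteq> \<one>\<^bsub>G\<^esub>" and nys: "\<forall>g' ys'. ys \<noteq> Inl g' # ys'" by blast+
    have g'': "g'' \<in> carrier G" using rc Cons Inl by simp
    have m: "fp_merge G H (Inl c) ys = (if c = \<one>\<^bsub>G\<^esub> then ys else Inl c # ys)" for c
      using nys by (cases ys rule: list.exhaust; case_tac "ys"; auto split: sum.splits) (metis fp_merge.simps sum.exhaust list.exhaust)+
    have a1: "g \<otimes>\<^bsub>G\<^esub> g' = \<one>\<^bsub>G\<^esub> \<Longrightarrow> g' \<otimes>\<^bsub>G\<^esub> g'' = \<one>\<^bsub>G\<^esub> \<Longrightarrow> g = g''"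
      using g g' g'' by (metis G.l_one G.r_one G.m_assoc)
    have a3: "g \<otimes>\<^bsub>G\<^esub> g' = \<one>\<^bsub>G\<^esub> \<Longrightarrow> g \<otimes>\<^bsub>G\<^esub> (g' \<otimes>\<^bsub>G\<^esub> g'') = g''"
      using g g' g'' by (simp flip: G.m_assoc)
    show ?thesis using Cons Inl g g' g'' ne a1 a3 by (auto simp: m G.m_assoc)
  next
    case (Inr h)
    then show ?thesis using Cons g g' by (auto simp: G.m_assoc)
  qed
qed

lemma K2r:
  assumes g: "g \<in> carrier H" and g': "g' \<in> carrier H" and r: "fp_red G H r = r" and rc: "inC G H r"
  shows "fp_merge G H (Inr g) (fp_merge G H (Inr g') r) = fp_merge G H (Inr (g \<otimes>\<^bsub>H\<^esub> g')) r"
proof (cases r)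
  case Nil
  then show ?thesis using g g' by auto
next
  case (Cons y ys)
  from fp_red_Cons_red[of G H y ys] r Cons have ys: "fp_red G H ys = ys" "fp_merge G H y ys = y # ys" by auto
  show ?thesis
  proof (cases y)
    case (Inr g'')
    from fpm_Inr_eq[OF ys(2)[unfolded Inr]] have ne: "g'' \<noteq> \<one>\<^bsub>H\<^esub>" and nys: "\<forall>g' ys'. ys \<noteq> Inr g' # ys'" by blast+
    have g'': "g'' \<in> carrier H" using rc Cons Inr by simp
    have m: "fp_merge G H (Inr c) ys = (if c = \<one>\<^bsub>H\<^esub> then ys else Inr c # ys)" for c
      using nys by (cases ys rule: list.exhaust; case_tac "ys"; auto split: sum.splits) (metis fp_merge.simps sum.exhaust list.exhaust)+
    have a1: "g \<otimes>\<^bsub>H\<^esub> g' = \<one>\<^bsub>H\<^esub> \<Longrightarrow> g' \<otimes>\<^bsub>H\<^esub> g'' = \<one>\<^bsub>H\<^esub> \<Longrightarrow> g = g''"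
      using g g' g'' by (metis H.l_one H.r_one H.m_assoc)
    have a3: "g \<otimes>\<^bsub>H\<^esub> g' = \<one>\<^bsub>H\<^esub> \<Longrightarrow> g \<otimes>\<^bsub>H\<^esub> (g' \<otimes>\<^bsub>H\<^esub> g'') = g''"
      using g g' g'' by (simp flip: H.m_assoc)
    show ?thesis using Cons Inr g g' g'' ne a1 a3 by (auto simp: m H.m_assoc)
  next
    case (Inl h)
    then show ?thesis using Cons g g' by (auto simp: H.m_assoc)
  qed
qed

lemma inC_fpm: "inC G H [x] \<Longrightarrow> inC G H r \<Longrightarrow> inC G H (fp_merge G H x r)"
  by (cases "(G, H, x, r)" rule: fp_merge.cases) auto

lemma inC_fp_red: "inC G H w \<Longrightarrow> inC G H (fp_red G H w)"
proof (induction w)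
  case Nil then show ?case by simp
next
  case (Cons x w)
  then show ?case by (cases x) (auto intro!: inC_fpm)
qed

lemma fp_red_fpm_append:
  assumes x: "inC G H [x]" and t: "inC G H t" "fp_red G H t = t" and ys: "inC G H ys"
  shows "fp_red G H (fp_merge G H x t @ ys) = fp_merge G H x (fp_red G H (t @ ys))"
proof -
  have rc: "inC G H (fp_red G H w)" if "inC G H w" for w using inC_fp_red that .
  show ?thesis
  proof (cases t)
    case Nil
    then show ?thesis using x by (cases x) (auto simp: fpm_one_l fpm_one_r)
  next
    case (Cons y t')
    have t': "inC G H t'" using t Cons by (cases y) auto
    show ?thesis
    proof (cases x; cases y)
      fix g g' assume xl: "x = Inl g" and yl: "y = Inl g'"
      have gg: "g \<in> carrier G" "g' \<in> carrier G" using x t Cons xl yl by auto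
      have k: "fp_merge G H (Inl g) (fp_merge G H (Inl g') (fp_red G H (t' @ ys)))
               = fp_merge G H (Inl (g \<otimes>\<^bsub>G\<^esub> g')) (fp_red G H (t' @ ys))"
        by (rule K2l) (use gg t' ys rc in auto)
      show ?thesis using xl yl Cons k gg by (auto simp: fpm_one_l)
    next
      fix g h' assume "x = Inl g" "y = Inr h'"
      then show ?thesis using Cons by (auto simp: fpm_one_l)
    next
      fix h g' assume "x = Inr h" "y = Inl g'"
      then show ?thesis using Cons by (auto simp: fpm_one_r)
    next
      fix g g' assume xl: "x = Inr g" and yl: "y = Inr g'"
      have gg: "g \<in> carrier H" "g' \<in> carrier H" using x t Cons xl yl by auto
      have k: "fp_merge G H (Inr g) (fp_merge G H (Inr g') (fp_red G H (t' @ ys)))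
               = fp_merge G H (Inr (g \<otimes>\<^bsub>H\<^esub> g')) (fp_red G H (t' @ ys))"
        by (rule K2r) (use gg t' ys rc in auto)
      show ?thesis using xl yl Cons k gg by (auto simp: fpm_one_r)
    qed
  qed
qed

lemma fp_red_red_append:
  "inC G H xs \<Longrightarrow> inC G H ys \<Longrightarrow> fp_red G H (fp_red G H xs @ ys) = fp_red G H (xs @ ys)"
proof (induction xs)
  case Nil then show ?case by simp
next
  case (Cons x xs)
  have x: "inC G H [x]" using Cons.prems by (cases x) auto
  have xs: "inC G H xs" using Cons.prems by (cases x) auto
  have "fp_red G H (fp_red G H (x # xs) @ ys) = fp_merge G H x (fp_red G H (fp_red G H xs @ ys))"
    by (simp add: fp_red_fpm_append[OF x inC_fp_red[OF xs] _ Cons.prems(2)])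
  then show ?case using Cons xs by simp
qed

fun pinv :: "('a + 'b) \<Rightarrow> ('a + 'b)" where
  "pinv (Inl g) = Inl (inv\<^bsub>G\<^esub> g)"
| "pinv (Inr h) = Inr (inv\<^bsub>H\<^esub> h)"

lemma fp_red_inv: "inC G H w \<Longrightarrow> fp_red G H (rev (map pinv w) @ w) = []"
proof (induction w)
  case Nil
  then show ?case by simp
next
  case (Cons a w)
  have w: "inC G H w" using Cons.prems by (cases a) auto
  have "fp_red G H (rev (map pinv (a # w)) @ a # w) = fp_red G H (rev (map pinv w) @ ([pinv a, a] @ w))"
    by simp
  also have "\<dots> = fp_red G H (rev (map pinv w) @ fp_red G H ([pinv a, a] @ w))"
    by (rule fp_red_append_red)
  also have "fp_red G H ([pinv a, a] @ w) = fp_red G H w"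
  proof (cases a)
    case (Inl g)
    then have g: "g \<in> carrier G" using Cons.prems by simp
    have "fp_merge G H (Inl (inv\<^bsub>G\<^esub> g)) (fp_merge G H (Inl g) (fp_red G H w)) = fp_red G H w"
      using K2l[of "inv\<^bsub>G\<^esub> g" g "fp_red G H w"] g inC_fp_red[OF w] by (simp add: fpm_one_l)
    then show ?thesis using Inl by simp
  next
    case (Inr g)
    then have g: "g \<in> carrier H" using Cons.prems by simp
    have "fp_merge G H (Inr (inv\<^bsub>H\<^esub> g)) (fp_merge G H (Inr g) (fp_red G H w)) = fp_red G H w"
      using K2r[of "inv\<^bsub>H\<^esub> g" g "fp_red G H w"] g inC_fp_red[OF w] by (simp add: fpm_one_r)
    then show ?thesis using Inr by simp
  qed
  also have "fp_red G H (rev (map pinv w) @ fp_red G H w) = fp_red G H (rev (map pinv w) @ w)"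
    by (rule fp_red_append_red[symmetric])
  finally show ?case using Cons w by simp
qed

lemma free_prod_simps:
  "carrier (free_prod G H) = {w. inC G H w \<and> fp_red G H w = w}"
  "x \<otimes>\<^bsub>free_prod G H\<^esub> y = fp_red G H (x @ y)"
  "\<one>\<^bsub>free_prod G H\<^esub> = []"
  by (simp_all add: free_prod_def inC_def)

lemma inC_map_pinv: "inC G H w \<Longrightarrow> inC G H (map pinv w)"
proof (induction w)
  case (Cons a w) then show ?case by (cases a) auto
qed simp

lemma inC_pinv: "inC G H w \<Longrightarrow> inC G H (rev (map pinv w))"
  by (simp add: inC_map_pinv)

lemma group_free_prod: "group (free_prod G H)"
proof (rule groupI)
  fix x y assume "x \<in> carrier (free_prod G H)" "y \<in> carrier (free_prod G H)"
  then show "x \<otimes>\<^bsub>free_prod G H\<^esub> y \<in> carrier (free_prod G H)"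
    by (auto simp: free_prod_simps intro: inC_fp_red)
next
  show "\<one>\<^bsub>free_prod G H\<^esub> \<in> carrier (free_prod G H)" by (simp add: free_prod_simps)
next
  fix x y z assume c: "x \<in> carrier (free_prod G H)" "y \<in> carrier (free_prod G H)" "z \<in> carrier (free_prod G H)"
  show "x \<otimes>\<^bsub>free_prod G H\<^esub> y \<otimes>\<^bsub>free_prod G H\<^esub> z = x \<otimes>\<^bsub>free_prod G H\<^esub> (y \<otimes>\<^bsub>free_prod G H\<^esub> z)"
  proof -
    have "fp_red G H (fp_red G H (x @ y) @ z) = fp_red G H (x @ y @ z)"
      using c by (simp add: fp_red_red_append free_prod_simps)
    moreover have "fp_red G H (x @ fp_red G H (y @ z)) = fp_red G H (x @ y @ z)"
      by (rule fp_red_append_red[symmetric])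
    ultimately show ?thesis by (simp add: free_prod_simps)
  qed
next
  fix x assume "x \<in> carrier (free_prod G H)"
  then show "\<one>\<^bsub>free_prod G H\<^esub> \<otimes>\<^bsub>free_prod G H\<^esub> x = x" by (simp add: free_prod_simps)
next
  fix x assume x: "x \<in> carrier (free_prod G H)"
  show "\<exists>y\<in>carrier (free_prod G H). y \<otimes>\<^bsub>free_prod G H\<^esub> x = \<one>\<^bsub>free_prod G H\<^esub>"
  proof (intro bexI)
    have xi: "inC G H x" using x by (simp add: free_prod_simps)
    show "fp_red G H (rev (map pinv x)) \<otimes>\<^bsub>free_prod G H\<^esub> x = \<one>\<^bsub>free_prod G H\<^esub>"
      using fp_red_red_append[OF inC_pinv[OF xi] xi] fp_red_inv[OF xi] by (simp add: free_prod_simps)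
    show "fp_red G H (rev (map pinv x)) \<in> carrier (free_prod G H)"
      using inC_fp_red[OF inC_pinv[OF xi]] by (simp add: free_prod_simps)
  qed
qed

end


lemma fp_lift_Nil [simp]: "fp_lift K \<phi> \<psi> [] = \<one>\<^bsub>K\<^esub>"
  by (simp add: fp_lift_def)

lemma fp_lift_Cons: "fp_lift K \<phi> \<psi> (x # w) = case_sum \<phi> \<psi> x \<otimes>\<^bsub>K\<^esub> fp_lift K \<phi> \<psi> w"
  by (cases x) (simp_all add: fp_lift_def)

lemma fp_lift_cong:
  "(\<And>g. Inl g \<in> set w \<Longrightarrow> \<phi> g = \<phi>' g) \<Longrightarrow> (\<And>h. Inr h \<in> set w \<Longrightarrow> \<psi> h = \<psi>' h) \<Longrightarrow>
   fp_lift K \<phi> \<psi> w = fp_lift K \<phi>' \<psi>' w"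
proof (induction w)
  case (Cons x w) then show ?case by (cases x) (auto simp: fp_lift_Cons)
qed simp

lemma fp_inl_eq: "fp_inl G H g = (if g = \<one>\<^bsub>G\<^esub> then [] else [Inl g])"
  by (simp add: fp_inl_def)

lemma fp_inr_eq: "fp_inr G H h = (if h = \<one>\<^bsub>H\<^esub> then [] else [Inr h])"
  by (simp add: fp_inr_def)

context
  fixes G :: "('a, 'm) monoid_scheme" and H :: "('b, 'n) monoid_scheme"
  assumes G: "group G" and H: "group H"
begin

interpretation G: group G by (rule G)
interpretation H: group H by (rule H)

lemma fp_inl_closed: "g \<in> carrier G \<Longrightarrow> fp_inl G H g \<in> carrier (free_prod G H)"
  by (simp add: fp_inl_eq free_prod_simps[OF G H])

lemma fp_inr_closed: "h \<in> carrier H \<Longrightarrow> fp_inr G H h \<in> carrier (free_prod G H)"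
  by (simp add: fp_inr_eq free_prod_simps[OF G H])

lemma fp_inl_hom: "fp_inl G H \<in> hom G (free_prod G H)"
proof (rule homI)
  fix x assume "x \<in> carrier G" then show "fp_inl G H x \<in> carrier (free_prod G H)" by (rule fp_inl_closed)
next
  fix x y assume xy: "x \<in> carrier G" "y \<in> carrier G"
  have "fp_red G H (fp_red G H [Inl x] @ fp_red G H [Inl y]) = fp_red G H ([Inl x] @ [Inl y])"
    using xy by (simp add: fp_red_red_append[OF G H] inC_fp_red[OF G H] flip: fp_red_append_red)
  also have "\<dots> = fp_merge G H (Inl x) (fp_merge G H (Inl y) [])" by simp
  also have "\<dots> = fp_merge G H (Inl (x \<otimes>\<^bsub>G\<^esub> y)) []" using xy by (intro K2l[OF G H]) auto
  finally show "fp_inl G H (x \<otimes>\<^bsub>G\<^esub> y) = fp_inl G H x \<otimes>\<^bsub>free_prod G H\<^esub> fp_inl G H y"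
    by (simp add: fp_inl_def free_prod_simps[OF G H])
qed

lemma fp_inr_hom: "fp_inr G H \<in> hom H (free_prod G H)"
proof (rule homI)
  fix x assume "x \<in> carrier H" then show "fp_inr G H x \<in> carrier (free_prod G H)" by (rule fp_inr_closed)
next
  fix x y assume xy: "x \<in> carrier H" "y \<in> carrier H"
  have "fp_red G H (fp_red G H [Inr x] @ fp_red G H [Inr y]) = fp_red G H ([Inr x] @ [Inr y])"
    using xy by (simp add: fp_red_red_append[OF G H] inC_fp_red[OF G H] flip: fp_red_append_red)
  also have "\<dots> = fp_merge G H (Inr x) (fp_merge G H (Inr y) [])" by simp
  also have "\<dots> = fp_merge G H (Inr (x \<otimes>\<^bsub>H\<^esub> y)) []" using xy by (intro K2r[OF G H]) auto
  finally show "fp_inr G H (x \<otimes>\<^bsub>H\<^esub> y) = fp_inr G H x \<otimes>\<^bsub>free_prod G H\<^esub> fp_inr G H y"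
    by (simp add: fp_inr_def free_prod_simps[OF G H])
qed

context
  fixes K :: "('c, 'k) monoid_scheme" and \<phi> \<psi>
  assumes K: "group K" and phi: "\<phi> \<in> hom G K" and psi: "\<psi> \<in> hom H K"
begin

interpretation K: group K by (rule K)

lemma phi1: "\<phi> \<one>\<^bsub>G\<^esub> = \<one>\<^bsub>K\<^esub>" by (rule hom_one[OF phi G K])
lemma psi1: "\<psi> \<one>\<^bsub>H\<^esub> = \<one>\<^bsub>K\<^esub>" by (rule hom_one[OF psi H K])

lemma pval_closed: "inC G H [x] \<Longrightarrow> case_sum \<phi> \<psi> x \<in> carrier K"
  by (cases x) (auto intro: hom_in_carrier[OF phi] hom_in_carrier[OF psi])

lemma fp_lift_closed: "inC G H w \<Longrightarrow> fp_lift K \<phi> \<psi> w \<in> carrier K"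
proof (induction w)
  case (Cons x w) then show ?case
    by (cases x) (auto simp: fp_lift_Cons intro: hom_in_carrier[OF phi] hom_in_carrier[OF psi])
qed simp

lemma fp_lift_append:
  "inC G H xs \<Longrightarrow> inC G H ys \<Longrightarrow> fp_lift K \<phi> \<psi> (xs @ ys) = fp_lift K \<phi> \<psi> xs \<otimes>\<^bsub>K\<^esub> fp_lift K \<phi> \<psi> ys"
proof (induction xs)
  case (Cons x xs)
  have x: "inC G H [x]" and xs: "inC G H xs" using Cons.prems by (cases x; auto)+
  show ?case using Cons.IH[OF xs Cons.prems(2)] pval_closed[OF x] fp_lift_closed xs Cons.prems(2)
    by (simp add: fp_lift_Cons K.m_assoc)
qed (simp add: fp_lift_closed)

lemma fp_lift_fpm:
  assumes x: "inC G H [x]" and t: "inC G H t"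
  shows "fp_lift K \<phi> \<psi> (fp_merge G H x t) = case_sum \<phi> \<psi> x \<otimes>\<^bsub>K\<^esub> fp_lift K \<phi> \<psi> t"
proof -
  have pc: "\<phi> g \<in> carrier K" if "g \<in> carrier G" for g using that hom_in_carrier[OF phi] by blast
  have qc: "\<psi> g \<in> carrier K" if "g \<in> carrier H" for g using that hom_in_carrier[OF psi] by blast
  have pm: "\<phi> (g \<otimes>\<^bsub>G\<^esub> g') = \<phi> g \<otimes>\<^bsub>K\<^esub> \<phi> g'" if "g \<in> carrier G" "g' \<in> carrier G" for g g'
    using that hom_mult[OF phi] by blast
  have qm: "\<psi> (g \<otimes>\<^bsub>H\<^esub> g') = \<psi> g \<otimes>\<^bsub>K\<^esub> \<psi> g'" if "g \<in> carrier H" "g' \<in> carrier H" for g g'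
    using that hom_mult[OF psi] by blast
  have lc: "fp_lift K \<phi> \<psi> ys \<in> carrier K" if "inC G H ys" for ys using that by (rule fp_lift_closed)
  show ?thesis
  proof (cases x)
    case (Inl g)
    then have g: "g \<in> carrier G" using x by simp
    show ?thesis
    proof (cases t)
      case Nil then show ?thesis using Inl g phi1 by (simp add: fp_lift_Cons pc)
    next
      case (Cons y ys)
      show ?thesis
      proof (cases y)
        case (Inl g')
        then have c: "g' \<in> carrier G" "inC G H ys" using t Cons by auto
        have e: "\<phi> g \<otimes>\<^bsub>K\<^esub> (\<phi> g' \<otimes>\<^bsub>K\<^esub> fp_lift K \<phi> \<psi> ys) = \<phi> (g \<otimes>\<^bsub>G\<^esub> g') \<otimes>\<^bsub>K\<^esub> fp_lift K \<phi> \<psi> ys"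
          using c g by (simp add: pm pc lc K.m_assoc)
        show ?thesis using \<open>x = Inl g\<close> Cons Inl e g c phi1 by (auto simp: fp_lift_Cons pc lc)
      next
        case (Inr h')
        then show ?thesis using \<open>x = Inl g\<close> Cons g phi1 t by (auto simp: fp_lift_Cons qc lc)
      qed
    qed
  next
    case (Inr g)
    then have g: "g \<in> carrier H" using x by simp
    show ?thesis
    proof (cases t)
      case Nil then show ?thesis using Inr g psi1 by (simp add: fp_lift_Cons qc)
    next
      case (Cons y ys)
      show ?thesis
      proof (cases y)
        case (Inr g')
        then have c: "g' \<in> carrier H" "inC G H ys" using t Cons by auto
        have e: "\<psi> g \<otimes>\<^bsub>K\<^esub> (\<psi> g' \<otimes>\<^bsub>K\<^esub> fp_lift K \<phi> \<psi> ys) = \<psi> (g \<otimes>\<^bsub>H\<^esub> g') \<otimes>\<^bsub>K\<^esub> fp_lift K \<phi> \<psi> ys"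
          using c g by (simp add: qm qc lc K.m_assoc)
        show ?thesis using \<open>x = Inr g\<close> Cons Inr e g c psi1 by (auto simp: fp_lift_Cons qc lc)
      next
        case (Inl h')
        then show ?thesis using \<open>x = Inr g\<close> Cons g psi1 t by (auto simp: fp_lift_Cons pc lc)
      qed
    qed
  qed
qed

lemma fp_lift_fp_red: "inC G H w \<Longrightarrow> fp_lift K \<phi> \<psi> (fp_red G H w) = fp_lift K \<phi> \<psi> w"
proof (induction w)
  case (Cons x w)
  have x: "inC G H [x]" and w: "inC G H w" using Cons.prems by (cases x; auto)+
  show ?case using Cons.IH[OF w] fp_lift_fpm[OF x inC_fp_red[OF G H w]] by (simp add: fp_lift_Cons)
qed simp

lemma fp_lift_hom: "fp_lift K \<phi> \<psi> \<in> hom (free_prod G H) K"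
proof (rule homI)
  fix x assume "x \<in> carrier (free_prod G H)"
  then show "fp_lift K \<phi> \<psi> x \<in> carrier K" by (simp add: free_prod_simps[OF G H] fp_lift_closed)
next
  fix x y assume "x \<in> carrier (free_prod G H)" "y \<in> carrier (free_prod G H)"
  then show "fp_lift K \<phi> \<psi> (x \<otimes>\<^bsub>free_prod G H\<^esub> y) = fp_lift K \<phi> \<psi> x \<otimes>\<^bsub>K\<^esub> fp_lift K \<phi> \<psi> y"
    by (simp add: free_prod_simps[OF G H] fp_lift_fp_red fp_lift_append)
qed

lemma fp_lift_inl: "g \<in> carrier G \<Longrightarrow> fp_lift K \<phi> \<psi> (fp_inl G H g) = \<phi> g"
  using phi1 hom_in_carrier[OF phi] by (auto simp: fp_inl_eq fp_lift_Cons)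

lemma fp_lift_inr: "h \<in> carrier H \<Longrightarrow> fp_lift K \<phi> \<psi> (fp_inr G H h) = \<psi> h"
  using psi1 hom_in_carrier[OF psi] by (auto simp: fp_inr_eq fp_lift_Cons)

end

lemma hom_fp_lift_eq:
  assumes K: "group K" and f: "f \<in> hom (free_prod G H) K" and w: "w \<in> carrier (free_prod G H)"
  shows "f w = fp_lift K (\<lambda>g. f (fp_inl G H g)) (\<lambda>h. f (fp_inr G H h)) w"
  using w
proof (induction w)
  case Nil
  have "f \<one>\<^bsub>free_prod G H\<^esub> = \<one>\<^bsub>K\<^esub>" by (rule hom_one[OF f group_free_prod[OF G H] K])
  then show ?case by (simp add: free_prod_simps[OF G H])
next
  case (Cons x w)
  interpret K: group K by (rule K)
  have red: "fp_red G H (x # w) = x # w" and xc: "inC G H [x]" and wc: "inC G H w"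
    using Cons.prems by (auto simp: free_prod_simps[OF G H] inC_def)
  from fp_red_Cons_red[OF red] have wred: "fp_red G H w = w" and fx: "fp_merge G H x w = x # w" by auto
  have wC: "w \<in> carrier (free_prod G H)" using wred wc by (simp add: free_prod_simps[OF G H])
  have xC: "[x] \<in> carrier (free_prod G H)" using xc fx
    by (cases x) (auto simp: free_prod_simps[OF G H] dest: fpm_Inl_eq fpm_Inr_eq)
  have eq: "x # w = [x] \<otimes>\<^bsub>free_prod G H\<^esub> w"
    using fx wred by (simp add: free_prod_simps[OF G H])
  have fx1: "f [x] = case_sum (\<lambda>g. f (fp_inl G H g)) (\<lambda>h. f (fp_inr G H h)) x"
    using fx by (cases x) (auto simp: fp_inl_eq fp_inr_eq dest: fpm_Inl_eq fpm_Inr_eq)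
  have "f (x # w) = f [x] \<otimes>\<^bsub>K\<^esub> f w" using eq xC wC hom_mult[OF f] by simp
  also have "\<dots> = fp_lift K (\<lambda>g. f (fp_inl G H g)) (\<lambda>h. f (fp_inr G H h)) (x # w)"
    using fx1 Cons.IH[OF wC] by (simp add: fp_lift_Cons)
  finally show ?case .
qed

lemma fp_hom_unique:
  assumes K: "group K" and f: "f \<in> hom (free_prod G H) K" and f': "f' \<in> hom (free_prod G H) K"
    and eql: "\<And>g. g \<in> carrier G \<Longrightarrow> f (fp_inl G H g) = f' (fp_inl G H g)"
    and eqr: "\<And>h. h \<in> carrier H \<Longrightarrow> f (fp_inr G H h) = f' (fp_inr G H h)"
    and w: "w \<in> carrier (free_prod G H)"
  shows "f w = f' w"
proof -
  have "inC G H w" using w by (simp add: free_prod_simps[OF G H])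
  then have "fp_lift K (\<lambda>g. f (fp_inl G H g)) (\<lambda>h. f (fp_inr G H h)) w
           = fp_lift K (\<lambda>g. f' (fp_inl G H g)) (\<lambda>h. f' (fp_inr G H h)) w"
    by (intro fp_lift_cong) (auto simp: inC_def eql eqr)
  then show ?thesis using hom_fp_lift_eq[OF K f w] hom_fp_lift_eq[OF K f' w] by simp
qed

end


abbreviation FG :: "nat \<Rightarrow> (nat \<times> bool) list monoid" where
  "FG n \<equiv> free_group {1..n}"

lemma Fcs_simps [simp]:
  "obj Fcs n = FG n"
  "coface Fcs n i = free_lift (FG (Suc n)) (F_coface_gen n i)"
  "codeg Fcs n i = free_lift (FG n) (F_codeg_gen i)"
  by (simp_all add: Fcs_def)

lemma fl_gen: "free_lift (free_group S) \<phi> [(m, True)] = fg_red (\<phi> m)"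
  by (simp add: gen_def free_lift_Cons lv_def free_group_simps)

lemma fl_two: "free_lift (free_group S) \<phi> [(a, True), (b, True)] = fg_red (\<phi> a @ fg_red (\<phi> b))"
  by (simp add: free_lift_Cons lv_def free_group_simps)

lemma fl_nil: "free_lift (free_group S) \<phi> [] = []"
  by (simp add: free_group_simps)

lemma cg_closed: "i \<le> Suc n \<Longrightarrow> j \<in> {1..n} \<Longrightarrow> F_coface_gen n i j \<in> carrier (FG (Suc n))"
  by (auto simp: F_coface_gen_def gen_def free_group_simps fg_red_Cons fgc_def)

lemma sg_closed: "i \<le> n \<Longrightarrow> j \<in> {1..Suc n} \<Longrightarrow> F_codeg_gen i j \<in> carrier (FG n)"
  by (auto simp: F_codeg_gen_def gen_def free_group_simps fg_red_Cons fgc_def)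

lemma Fcs_coface_hom: "i \<le> Suc n \<Longrightarrow> coface Fcs n i \<in> hom (obj Fcs n) (obj Fcs (Suc n))"
  unfolding Fcs_simps by (rule free_lift_hom[OF group_free_group]) (rule cg_closed; simp)

lemma Fcs_codeg_hom: "i \<le> n \<Longrightarrow> codeg Fcs n i \<in> hom (obj Fcs (Suc n)) (obj Fcs n)"
  unfolding Fcs_simps by (rule free_lift_hom[OF group_free_group]) (rule sg_closed; simp)

lemma id_hom': "(\<lambda>x. x) \<in> hom G G"
  by (rule homI) auto

lemmas Fcs_unique = free_hom_unique[OF group_free_group]

lemmas Fcs_calc = F_coface_gen_def F_codeg_gen_def fl_gen fl_two fl_nil gen_def fg_red_Cons fgc_def free_group_simps

lemma Fcs_id1:
  assumes "i < j" "j \<le> Suc (Suc n)" "x \<in> carrier (obj Fcs n)"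
  shows "coface Fcs (Suc n) j (coface Fcs n i x) = coface Fcs (Suc n) i (coface Fcs n (j - 1) x)"
proof -
  have "(coface Fcs (Suc n) j \<circ> coface Fcs n i) x = (coface Fcs (Suc n) i \<circ> coface Fcs n (j - 1)) x"
  proof (rule Fcs_unique[where f = "coface Fcs (Suc n) j \<circ> coface Fcs n i"
        and f' = "coface Fcs (Suc n) i \<circ> coface Fcs n (j - 1)"])
    show "coface Fcs (Suc n) j \<circ> coface Fcs n i \<in> hom (FG n) (FG (Suc (Suc n)))"
      using hom_compose[OF Fcs_coface_hom[of i n] Fcs_coface_hom[of j "Suc n"]] assms by simp
    have "j - 1 \<le> Suc n" "i \<le> Suc (Suc n)" using assms by auto
    from hom_compose[OF Fcs_coface_hom[OF this(1)] Fcs_coface_hom[OF this(2)]]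
    show "coface Fcs (Suc n) i \<circ> coface Fcs n (j - 1) \<in> hom (FG n) (FG (Suc (Suc n)))" by simp
    show "x \<in> carrier (FG n)" using assms by simp
  next
    fix g assume g: "g \<in> {1..n}"
    show "(coface Fcs (Suc n) j \<circ> coface Fcs n i) (gen g) = (coface Fcs (Suc n) i \<circ> coface Fcs n (j - 1)) (gen g)"
      using assms g by (auto simp: Fcs_calc)
  qed
  then show ?thesis by simp
qed

lemma Fcs_id2:
  assumes "i < j" "j \<le> Suc n" "x \<in> carrier (obj Fcs (Suc n))"
  shows "codeg Fcs (Suc n) j (coface Fcs (Suc n) i x) = coface Fcs n i (codeg Fcs n (j - 1) x)"
proof -
  have "(codeg Fcs (Suc n) j \<circ> coface Fcs (Suc n) i) x = (coface Fcs n i \<circ> codeg Fcs n (j - 1)) x"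
  proof (rule Fcs_unique[where f = "codeg Fcs (Suc n) j \<circ> coface Fcs (Suc n) i"
        and f' = "coface Fcs n i \<circ> codeg Fcs n (j - 1)"])
    have "i \<le> Suc (Suc n)" "j \<le> Suc n" using assms by auto
    from hom_compose[OF Fcs_coface_hom[OF this(1)] Fcs_codeg_hom[OF this(2)]]
    show "codeg Fcs (Suc n) j \<circ> coface Fcs (Suc n) i \<in> hom (FG (Suc n)) (FG (Suc n))" by simp
    have "j - 1 \<le> n" "i \<le> Suc n" using assms by auto
    from hom_compose[OF Fcs_codeg_hom[OF this(1)] Fcs_coface_hom[OF this(2)]]
    show "coface Fcs n i \<circ> codeg Fcs n (j - 1) \<in> hom (FG (Suc n)) (FG (Suc n))" by simp
    show "x \<in> carrier (FG (Suc n))" using assms by simp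
  next
    fix g assume g: "g \<in> {1..Suc n}"
    show "(codeg Fcs (Suc n) j \<circ> coface Fcs (Suc n) i) (gen g) = (coface Fcs n i \<circ> codeg Fcs n (j - 1)) (gen g)"
      using assms g by (auto simp: Fcs_calc)
  qed
  then show ?thesis by simp
qed

lemma Fcs_id3:
  assumes "j \<le> n" "x \<in> carrier (obj Fcs n)"
  shows "codeg Fcs n j (coface Fcs n j x) = x \<and> codeg Fcs n j (coface Fcs n (Suc j) x) = x"
proof
  have "(codeg Fcs n j \<circ> coface Fcs n j) x = (\<lambda>x. x) x"
  proof (rule Fcs_unique[where f = "codeg Fcs n j \<circ> coface Fcs n j" and f' = "\<lambda>x. x"])
    have "j \<le> Suc n" "j \<le> n" using assms by auto
    from hom_compose[OF Fcs_coface_hom[OF this(1)] Fcs_codeg_hom[OF this(2)]]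
    show "codeg Fcs n j \<circ> coface Fcs n j \<in> hom (FG n) (FG n)" by simp
    show "(\<lambda>x. x) \<in> hom (FG n) (FG n)" by (rule id_hom')
    show "x \<in> carrier (FG n)" using assms by simp
  next
    fix g assume g: "g \<in> {1..n}"
    show "(codeg Fcs n j \<circ> coface Fcs n j) (gen g) = (gen g)"
      using assms g by (auto simp: Fcs_calc)
  qed
  then show "codeg Fcs n j (coface Fcs n j x) = x" by simp
next
  have "(codeg Fcs n j \<circ> coface Fcs n (Suc j)) x = (\<lambda>x. x) x"
  proof (rule Fcs_unique[where f = "codeg Fcs n j \<circ> coface Fcs n (Suc j)" and f' = "\<lambda>x. x"])
    have "Suc j \<le> Suc n" "j \<le> n" using assms by auto
    from hom_compose[OF Fcs_coface_hom[OF this(1)] Fcs_codeg_hom[OF this(2)]]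
    show "codeg Fcs n j \<circ> coface Fcs n (Suc j) \<in> hom (FG n) (FG n)" by simp
    show "(\<lambda>x. x) \<in> hom (FG n) (FG n)" by (rule id_hom')
    show "x \<in> carrier (FG n)" using assms by simp
  next
    fix g assume g: "g \<in> {1..n}"
    show "(codeg Fcs n j \<circ> coface Fcs n (Suc j)) (gen g) = (gen g)"
      using assms g by (auto simp: Fcs_calc)
  qed
  then show "codeg Fcs n j (coface Fcs n (Suc j) x) = x" by simp
qed

lemma Fcs_id4:
  assumes "Suc j < i" "i \<le> Suc (Suc n)" "x \<in> carrier (obj Fcs (Suc n))"
  shows "codeg Fcs (Suc n) j (coface Fcs (Suc n) i x) = coface Fcs n (i - 1) (codeg Fcs n j x)"
proof -
  have "(codeg Fcs (Suc n) j \<circ> coface Fcs (Suc n) i) x = (coface Fcs n (i - 1) \<circ> codeg Fcs n j) x"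
  proof (rule Fcs_unique[where f = "codeg Fcs (Suc n) j \<circ> coface Fcs (Suc n) i"
        and f' = "coface Fcs n (i - 1) \<circ> codeg Fcs n j"])
    have "i \<le> Suc (Suc n)" "j \<le> Suc n" using assms by auto
    from hom_compose[OF Fcs_coface_hom[OF this(1)] Fcs_codeg_hom[OF this(2)]]
    show "codeg Fcs (Suc n) j \<circ> coface Fcs (Suc n) i \<in> hom (FG (Suc n)) (FG (Suc n))" by simp
    have "j \<le> n" "i - 1 \<le> Suc n" using assms by auto
    from hom_compose[OF Fcs_codeg_hom[OF this(1)] Fcs_coface_hom[OF this(2)]]
    show "coface Fcs n (i - 1) \<circ> codeg Fcs n j \<in> hom (FG (Suc n)) (FG (Suc n))" by simp
    show "x \<in> carrier (FG (Suc n))" using assms by simp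
  next
    fix g assume g: "g \<in> {1..Suc n}"
    show "(codeg Fcs (Suc n) j \<circ> coface Fcs (Suc n) i) (gen g) = (coface Fcs n (i - 1) \<circ> codeg Fcs n j) (gen g)"
      using assms g by (auto simp: Fcs_calc)
  qed
  then show ?thesis by simp
qed

lemma Fcs_id5:
  assumes "i \<le> j" "j \<le> n" "x \<in> carrier (obj Fcs (Suc (Suc n)))"
  shows "codeg Fcs n j (codeg Fcs (Suc n) i x) = codeg Fcs n i (codeg Fcs (Suc n) (Suc j) x)"
proof -
  have "(codeg Fcs n j \<circ> codeg Fcs (Suc n) i) x = (codeg Fcs n i \<circ> codeg Fcs (Suc n) (Suc j)) x"
  proof (rule Fcs_unique[where f = "codeg Fcs n j \<circ> codeg Fcs (Suc n) i"
        and f' = "codeg Fcs n i \<circ> codeg Fcs (Suc n) (Suc j)"])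
    have "i \<le> Suc n" "j \<le> n" using assms by auto
    from hom_compose[OF Fcs_codeg_hom[OF this(1)] Fcs_codeg_hom[OF this(2)]]
    show "codeg Fcs n j \<circ> codeg Fcs (Suc n) i \<in> hom (FG (Suc (Suc n))) (FG n)" by simp
    have "Suc j \<le> Suc n" "i \<le> n" using assms by auto
    from hom_compose[OF Fcs_codeg_hom[OF this(1)] Fcs_codeg_hom[OF this(2)]]
    show "codeg Fcs n i \<circ> codeg Fcs (Suc n) (Suc j) \<in> hom (FG (Suc (Suc n))) (FG n)" by simp
    show "x \<in> carrier (FG (Suc (Suc n)))" using assms by simp
  next
    fix g assume g: "g \<in> {1..Suc (Suc n)}"
    show "(codeg Fcs n j \<circ> codeg Fcs (Suc n) i) (gen g) = (codeg Fcs n i \<circ> codeg Fcs (Suc n) (Suc j)) (gen g)"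
      using assms g by (auto simp: Fcs_calc)
  qed
  then show ?thesis by simp
qed

lemma cosimp_group_Fcs: "cosimp_group Fcs"
  unfolding cosimp_group_def
proof (intro conjI allI impI)
  show "\<And>n. group (obj Fcs n)" by (simp add: group_free_group)
qed (auto intro: Fcs_coface_hom Fcs_codeg_hom Fcs_id1[unfolded One_nat_def] Fcs_id2[unfolded One_nat_def] Fcs_id4[unfolded One_nat_def] Fcs_id5 dest: Fcs_id3 simp del: Fcs_simps)

lemma gen1_Z1: "gen 1 \<in> Z1 Fcs"
  by (simp add: Z1_def gen_closed free_group_simps Fcs_calc)


lemma group_Fbar0: "group Fbar0"
  by (simp add: Fbar0_def group_free_group)

lemma gen0_closed: "gen 0 \<in> carrier Fbar0"
  by (simp add: Fbar0_def gen_closed)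

definition A :: "'a cosimp \<Rightarrow> nat \<Rightarrow> ((nat \<times> bool) list + 'a) list" where
  "A L n = fp_inl Fbar0 (obj L n) (gen 0)"

definition I :: "'a cosimp \<Rightarrow> nat \<Rightarrow> 'a \<Rightarrow> ((nat \<times> bool) list + 'a) list" where
  "I L n = fp_inr Fbar0 (obj L n)"

lemma Lb_simps:
  "obj (Lb L b) n = Lb_obj L n"
  "coface (Lb L b) n i = (if i = 0 then
                 fp_lift (Lb_obj L (Suc n))
                   (free_lift (Lb_obj L (Suc n)) (\<lambda>_. A L (Suc n) \<otimes>\<^bsub>Lb_obj L (Suc n)\<^esub> I L (Suc n) (bseq L b (Suc n))))
                   (\<lambda>y. I L (Suc n) (coface L n 0 y))
               else fp_lift (Lb_obj L (Suc n)) (fp_inl Fbar0 (obj L (Suc n))) (\<lambda>y. I L (Suc n) (coface L n i y)))"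
  "codeg (Lb L b) n i = fp_lift (Lb_obj L n) (fp_inl Fbar0 (obj L n)) (\<lambda>y. I L n (codeg L n i y))"
  by (simp_all add: Lb_def A_def I_def)

context
  fixes L :: "'a cosimp"
  assumes Lg: "\<And>n. group (obj L n)"
begin

lemma group_Lb_obj: "group (Lb_obj L n)"
  by (simp add: Lb_obj_def group_free_prod[OF group_Fbar0 Lg])

lemma A_closed: "A L n \<in> carrier (Lb_obj L n)"
  by (simp add: A_def Lb_obj_def fp_inl_closed[OF group_Fbar0 Lg] gen0_closed)

lemma I_closed: "y \<in> carrier (obj L n) \<Longrightarrow> I L n y \<in> carrier (Lb_obj L n)"
  by (simp add: I_def Lb_obj_def fp_inr_closed[OF group_Fbar0 Lg])

lemma I_hom: "I L n \<in> hom (obj L n) (Lb_obj L n)"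
  unfolding I_def Lb_obj_def by (rule fp_inr_hom[OF group_Fbar0 Lg])

lemma I_mult: "x \<in> carrier (obj L n) \<Longrightarrow> y \<in> carrier (obj L n) \<Longrightarrow>
  I L n (x \<otimes>\<^bsub>obj L n\<^esub> y) = I L n x \<otimes>\<^bsub>Lb_obj L n\<^esub> I L n y"
  using hom_mult[OF I_hom] by blast

lemma I_one: "I L n \<one>\<^bsub>obj L n\<^esub> = \<one>\<^bsub>Lb_obj L n\<^esub>"
  by (rule hom_one[OF I_hom Lg group_Lb_obj])

lemma inl_hom: "fp_inl Fbar0 (obj L n) \<in> hom Fbar0 (Lb_obj L n)"
  unfolding Lb_obj_def by (rule fp_inl_hom[OF group_Fbar0 Lg])

lemma Lb_unique:
  assumes K: "group K" and f: "f \<in> hom (Lb_obj L n) K" and f': "f' \<in> hom (Lb_obj L n) K"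
    and eA: "f (A L n) = f' (A L n)" and eI: "\<And>y. y \<in> carrier (obj L n) \<Longrightarrow> f (I L n y) = f' (I L n y)"
    and x: "x \<in> carrier (Lb_obj L n)"
  shows "f x = f' x"
proof -
  have fl: "f \<circ> fp_inl Fbar0 (obj L n) \<in> hom Fbar0 K" using hom_compose[OF inl_hom f] .
  have fl': "f' \<circ> fp_inl Fbar0 (obj L n) \<in> hom Fbar0 K" using hom_compose[OF inl_hom f'] .
  show ?thesis
  proof (rule fp_hom_unique[OF group_Fbar0 Lg K])
    show "f \<in> hom (free_prod Fbar0 (obj L n)) K" using f by (simp add: Lb_obj_def)
    show "f' \<in> hom (free_prod Fbar0 (obj L n)) K" using f' by (simp add: Lb_obj_def)
    show "x \<in> carrier (free_prod Fbar0 (obj L n))" using x by (simp add: Lb_obj_def)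
    show "f (fp_inr Fbar0 (obj L n) h) = f' (fp_inr Fbar0 (obj L n) h)" if "h \<in> carrier (obj L n)" for h
      using eI[OF that] by (simp add: I_def)
    show "f (fp_inl Fbar0 (obj L n) g) = f' (fp_inl Fbar0 (obj L n) g)" if g: "g \<in> carrier Fbar0" for g
    proof -
      have "(f \<circ> fp_inl Fbar0 (obj L n)) g = (f' \<circ> fp_inl Fbar0 (obj L n)) g"
        using free_hom_unique[OF K fl[unfolded Fbar0_def] fl'[unfolded Fbar0_def], of g] g eA
        by (simp add: A_def Fbar0_def)
      then show ?thesis by simp
    qed
  qed
qed

lemma fp_lift_Lb_hom:
  assumes K: "group K" and phi: "\<phi> \<in> hom Fbar0 K" and psi: "\<psi> \<in> hom (obj L n) K"
  shows "fp_lift K \<phi> \<psi> \<in> hom (Lb_obj L n) K"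
  unfolding Lb_obj_def by (rule fp_lift_hom[OF group_Fbar0 Lg K phi psi])

lemma fp_lift_A:
  assumes K: "group K" and phi: "\<phi> \<in> hom Fbar0 K" and psi: "\<psi> \<in> hom (obj L n) K"
  shows "fp_lift K \<phi> \<psi> (A L n) = \<phi> (gen 0)"
  unfolding A_def by (rule fp_lift_inl[OF group_Fbar0 Lg K phi psi gen0_closed])

lemma fp_lift_I:
  assumes K: "group K" and phi: "\<phi> \<in> hom Fbar0 K" and psi: "\<psi> \<in> hom (obj L n) K"
    and y: "y \<in> carrier (obj L n)"
  shows "fp_lift K \<phi> \<psi> (I L n y) = \<psi> y"
  unfolding I_def by (rule fp_lift_inr[OF group_Fbar0 Lg K phi psi y])

lemma free_lift_Fbar0_hom:
  assumes K: "group K" and c: "c \<in> carrier K"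
  shows "free_lift K (\<lambda>_. c) \<in> hom Fbar0 K"
  unfolding Fbar0_def by (rule free_lift_hom[OF K]) (use c in auto)

lemma free_lift_Fbar0_gen:
  assumes K: "group K" and c: "c \<in> carrier K"
  shows "free_lift K (\<lambda>_. c) (gen 0) = c"
  by (rule free_lift_gen[OF K, of "{0}"]) (use c in auto)

end


context
  fixes L :: "'a cosimp"
  assumes L: "cosimp_group L"
begin

lemma Lg: "group (obj L n)"
  using L by (simp add: cosimp_group_def)

lemma Lcf: "i \<le> Suc n \<Longrightarrow> coface L n i \<in> hom (obj L n) (obj L (Suc n))"
  using L by (simp add: cosimp_group_def)

lemma Lcd: "i \<le> n \<Longrightarrow> codeg L n i \<in> hom (obj L (Suc n)) (obj L n)"
  using L by (simp add: cosimp_group_def)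

lemma Lconj1: "(\<forall>n i j x. i < j \<and> j \<le> Suc (Suc n) \<and> x \<in> carrier (obj L n) \<longrightarrow>
        coface L (Suc n) j (coface L n i x) = coface L (Suc n) i (coface L n (j - 1) x))"
  using L unfolding cosimp_group_def by (elim conjE) assumption

lemma Lconj2: "(\<forall>n i j x. i < j \<and> j \<le> Suc n \<and> x \<in> carrier (obj L (Suc n)) \<longrightarrow>
        codeg L (Suc n) j (coface L (Suc n) i x) = coface L n i (codeg L n (j - 1) x))"
  using L unfolding cosimp_group_def by (elim conjE) assumption

lemma Lconj3: "(\<forall>n j x. j \<le> n \<and> x \<in> carrier (obj L n) \<longrightarrow>
        codeg L n j (coface L n j x) = x \<and> codeg L n j (coface L n (Suc j) x) = x)"
  using L unfolding cosimp_group_def by (elim conjE) assumption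

lemma Lconj4: "(\<forall>n i j x. Suc j < i \<and> i \<le> Suc (Suc n) \<and> x \<in> carrier (obj L (Suc n)) \<longrightarrow>
        codeg L (Suc n) j (coface L (Suc n) i x) = coface L n (i - 1) (codeg L n j x))"
  using L unfolding cosimp_group_def by (elim conjE) assumption

lemma Lconj5: "(\<forall>n i j x. i \<le> j \<and> j \<le> n \<and> x \<in> carrier (obj L (Suc (Suc n))) \<longrightarrow>
        codeg L n j (codeg L (Suc n) i x) = codeg L n i (codeg L (Suc n) (Suc j) x))"
  using L unfolding cosimp_group_def by (elim conjE) assumption

lemma Lid1: "i < j \<Longrightarrow> j \<le> Suc (Suc n) \<Longrightarrow> x \<in> carrier (obj L n) \<Longrightarrow>
        coface L (Suc n) j (coface L n i x) = coface L (Suc n) i (coface L n (j - 1) x)"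
  using Lconj1 by blast

lemma Lid2: "i < j \<Longrightarrow> j \<le> Suc n \<Longrightarrow> x \<in> carrier (obj L (Suc n)) \<Longrightarrow>
        codeg L (Suc n) j (coface L (Suc n) i x) = coface L n i (codeg L n (j - 1) x)"
  using Lconj2 by blast

lemma Lid3: "j \<le> n \<Longrightarrow> x \<in> carrier (obj L n) \<Longrightarrow>
        codeg L n j (coface L n j x) = x \<and> codeg L n j (coface L n (Suc j) x) = x"
  using Lconj3 by blast

lemma Lid4: "Suc j < i \<Longrightarrow> i \<le> Suc (Suc n) \<Longrightarrow> x \<in> carrier (obj L (Suc n)) \<Longrightarrow>
        codeg L (Suc n) j (coface L (Suc n) i x) = coface L n (i - 1) (codeg L n j x)"
  using Lconj4 by blast

lemma Lid5: "i \<le> j \<Longrightarrow> j \<le> n \<Longrightarrow> x \<in> carrier (obj L (Suc (Suc n))) \<Longrightarrow>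
        codeg L n j (codeg L (Suc n) i x) = codeg L n i (codeg L (Suc n) (Suc j) x)"
  using Lconj5 by blast

lemma Lcf_closed: "i \<le> Suc n \<Longrightarrow> x \<in> carrier (obj L n) \<Longrightarrow> coface L n i x \<in> carrier (obj L (Suc n))"
  using hom_in_carrier[OF Lcf] by blast

lemma Lcd_closed: "i \<le> n \<Longrightarrow> x \<in> carrier (obj L (Suc n)) \<Longrightarrow> codeg L n i x \<in> carrier (obj L n)"
  using hom_in_carrier[OF Lcd] by blast

lemma Lcf_mult: "i \<le> Suc n \<Longrightarrow> x \<in> carrier (obj L n) \<Longrightarrow> y \<in> carrier (obj L n) \<Longrightarrow>
   coface L n i (x \<otimes>\<^bsub>obj L n\<^esub> y) = coface L n i x \<otimes>\<^bsub>obj L (Suc n)\<^esub> coface L n i y"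
  using hom_mult[OF Lcf] by blast

lemma Lcd_mult: "i \<le> n \<Longrightarrow> x \<in> carrier (obj L (Suc n)) \<Longrightarrow> y \<in> carrier (obj L (Suc n)) \<Longrightarrow>
   codeg L n i (x \<otimes>\<^bsub>obj L (Suc n)\<^esub> y) = codeg L n i x \<otimes>\<^bsub>obj L n\<^esub> codeg L n i y"
  using hom_mult[OF Lcd] by blast

lemma Lcf_one: "i \<le> Suc n \<Longrightarrow> coface L n i \<one>\<^bsub>obj L n\<^esub> = \<one>\<^bsub>obj L (Suc n)\<^esub>"
  using hom_one[OF Lcf Lg Lg] by blast

lemma Lcd_one: "i \<le> n \<Longrightarrow> codeg L n i \<one>\<^bsub>obj L (Suc n)\<^esub> = \<one>\<^bsub>obj L n\<^esub>"
  using hom_one[OF Lcd Lg Lg] by blast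

context
  fixes b assumes b: "b \<in> Z1 L"
begin

lemma bZ: "b \<in> carrier (obj L 1)" "coface L 1 2 b \<otimes>\<^bsub>obj L 2\<^esub> coface L 1 0 b = coface L 1 1 b"
  using b by (auto simp: Z1_def)

lemma bseq_Suc: "1 \<le> n \<Longrightarrow> bseq L b (Suc n) = coface L n (Suc n) (bseq L b n)"
  by (cases n) auto

lemma B0: "1 \<le> n \<Longrightarrow> bseq L b n \<in> carrier (obj L n)"
proof (induction n)
  case 0 then show ?case by simp
next
  case (Suc m)
  show ?case
  proof (cases m)
    case 0 then show ?thesis using bZ by simp
  next
    case (Suc k)
    then have m1: "1 \<le> m" by simp
    have "coface L m (Suc m) (bseq L b m) \<in> carrier (obj L (Suc m))"
      using Suc.IH[OF m1] Lcf_closed[of "Suc m" m] by simp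
    then show ?thesis using bseq_Suc[OF m1] by simp
  qed
qed

lemma B1: "1 \<le> n \<Longrightarrow> 2 \<le> j \<Longrightarrow> j \<le> Suc n \<Longrightarrow> coface L n j (bseq L b n) = bseq L b (Suc n)"
proof (induction n arbitrary: j)
  case 0 then show ?case by simp
next
  case (Suc m)
  show ?case
  proof (cases "j = Suc (Suc m)")
    case True then show ?thesis using bseq_Suc[of "Suc m"] by simp
  next
    case False
    then have j: "j \<le> Suc m" using Suc.prems by simp
    then have m1: "1 \<le> m" using Suc.prems by simp
    have "coface L (Suc m) j (bseq L b (Suc m)) = coface L (Suc m) j (coface L m (Suc m) (bseq L b m))"
      using bseq_Suc[OF m1] by simp
    also have "\<dots> = coface L (Suc m) (Suc (Suc m)) (coface L m j (bseq L b m))"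
      using Lid1[of j "Suc (Suc m)" m "bseq L b m"] j B0[OF m1] by simp
    also have "\<dots> = coface L (Suc m) (Suc (Suc m)) (bseq L b (Suc m))"
      using Suc.IH[OF m1 Suc.prems(2) j] by simp
    also have "\<dots> = bseq L b (Suc (Suc m))" by simp
    finally show ?thesis .
  qed
qed

lemma B2: "1 \<le> n \<Longrightarrow> coface L n 1 (bseq L b n) = bseq L b (Suc n) \<otimes>\<^bsub>obj L (Suc n)\<^esub> coface L n 0 (bseq L b n)"
proof (induction n)
  case 0 then show ?case by simp
next
  case (Suc m)
  show ?case
  proof (cases m)
    case 0 then show ?thesis using bZ(2) by (simp add: numeral_2_eq_2)
  next
    case (Suc k)
    then have m1: "1 \<le> m" by simp
    have bm: "bseq L b m \<in> carrier (obj L m)" using B0[OF m1] .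
    have "coface L (Suc m) 1 (bseq L b (Suc m)) = coface L (Suc m) 1 (coface L m (Suc m) (bseq L b m))"
      using bseq_Suc[OF m1] by simp
    also have "\<dots> = coface L (Suc m) (Suc (Suc m)) (coface L m 1 (bseq L b m))"
      using Lid1[of 1 "Suc (Suc m)" m "bseq L b m"] bm m1 by simp
    also have "\<dots> = coface L (Suc m) (Suc (Suc m)) (bseq L b (Suc m) \<otimes>\<^bsub>obj L (Suc m)\<^esub> coface L m 0 (bseq L b m))"
      using Suc.IH[OF m1] by simp
    also have "\<dots> = bseq L b (Suc (Suc m)) \<otimes>\<^bsub>obj L (Suc (Suc m))\<^esub> coface L (Suc m) (Suc (Suc m)) (coface L m 0 (bseq L b m))"
      using Lcf_mult[of "Suc (Suc m)" "Suc m"] B0[of "Suc m"] Lcf_closed[of 0 m] bm by simp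
    also have "coface L (Suc m) (Suc (Suc m)) (coface L m 0 (bseq L b m)) = coface L (Suc m) 0 (bseq L b (Suc m))"
      using Lid1[of 0 "Suc (Suc m)" m "bseq L b m"] bm bseq_Suc[OF m1] by simp
    finally show ?thesis .
  qed
qed

lemma B3: "1 \<le> j \<Longrightarrow> j \<le> n \<Longrightarrow> codeg L n j (bseq L b (Suc n)) = bseq L b n"
proof (induction n arbitrary: j)
  case 0 then show ?case by simp
next
  case (Suc m)
  have m1: "1 \<le> Suc m" by simp
  show ?case
  proof (cases "j = Suc m")
    case True
    then show ?thesis using Lid3[of "Suc m" "Suc m" "bseq L b (Suc m)"] B0[OF m1] bseq_Suc[of "Suc m"] by simp
  next
    case False
    then have j: "j \<le> m" using Suc.prems by simp
    then have m1': "1 \<le> m" using Suc.prems by simp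
    have "codeg L (Suc m) j (bseq L b (Suc (Suc m))) = codeg L (Suc m) j (coface L (Suc m) (Suc (Suc m)) (bseq L b (Suc m)))"
      by simp
    also have "\<dots> = coface L m (Suc m) (codeg L m j (bseq L b (Suc m)))"
      using Lid4[of j "Suc (Suc m)" m "bseq L b (Suc m)"] j B0[OF m1] by simp
    also have "\<dots> = coface L m (Suc m) (bseq L b m)" using Suc.IH[OF Suc.prems(1) j] by simp
    also have "\<dots> = bseq L b (Suc m)" using bseq_Suc[OF m1'] by simp
    finally show ?thesis .
  qed
qed

lemma B4: "codeg L n 0 (bseq L b (Suc n)) = \<one>\<^bsub>obj L n\<^esub>"
proof (induction n)
  case 0
  interpret G1: group "obj L 1" by (rule Lg)
  interpret G0: group "obj L 0" by (rule Lg)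
  have b1: "b \<in> carrier (obj L 1)" by (rule bZ(1))
  have c0: "codeg L 0 0 b \<in> carrier (obj L 0)" using Lcd_closed[of 0 0 b] b1 by simp
  have cc: "coface L 0 0 (codeg L 0 0 b) \<in> carrier (obj L 1)" using Lcf_closed[of 0 0] c0 by simp
  have "codeg L 1 1 (coface L 1 2 b \<otimes>\<^bsub>obj L 2\<^esub> coface L 1 0 b) = codeg L 1 1 (coface L 1 1 b)"
    using bZ(2) by simp
  moreover have "codeg L 1 1 (coface L 1 2 b \<otimes>\<^bsub>obj L 2\<^esub> coface L 1 0 b)
     = codeg L 1 1 (coface L 1 2 b) \<otimes>\<^bsub>obj L 1\<^esub> codeg L 1 1 (coface L 1 0 b)"
    using Lcd_mult[of 1 1] Lcf_closed[of 2 1 b] Lcf_closed[of 0 1 b] b1 by (simp add: numeral_2_eq_2)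
  moreover have "codeg L 1 1 (coface L 1 1 b) = b" "codeg L 1 1 (coface L 1 2 b) = b"
    using Lid3[of 1 1 b] b1 by (simp_all add: numeral_2_eq_2)
  moreover have "codeg L 1 1 (coface L 1 0 b) = coface L 0 0 (codeg L 0 0 b)"
    using Lid2[of 0 1 0 b] b1 by simp
  ultimately have "b \<otimes>\<^bsub>obj L 1\<^esub> coface L 0 0 (codeg L 0 0 b) = b" by simp
  then have "coface L 0 0 (codeg L 0 0 b) = \<one>\<^bsub>obj L 1\<^esub>"
    using G1.l_cancel_one[OF b1 cc] by simp
  then have "codeg L 0 0 (coface L 0 0 (codeg L 0 0 b)) = \<one>\<^bsub>obj L 0\<^esub>"
    using Lcd_one[of 0 0] by simp
  then show ?case using Lid3[of 0 0 "codeg L 0 0 b"] c0 by simp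
next
  case (Suc m)
  have "codeg L (Suc m) 0 (bseq L b (Suc (Suc m))) = codeg L (Suc m) 0 (coface L (Suc m) (Suc (Suc m)) (bseq L b (Suc m)))"
    by simp
  also have "\<dots> = coface L m (Suc m) (codeg L m 0 (bseq L b (Suc m)))"
    using Lid4[of 0 "Suc (Suc m)" m "bseq L b (Suc m)"] B0[of "Suc m"] by simp
  also have "\<dots> = \<one>\<^bsub>obj L (Suc m)\<^esub>" using Suc.IH Lcf_one[of "Suc m" m] by simp
  finally show ?case .
qed

end
end


context
  fixes L :: "'a cosimp" and b
  assumes L: "cosimp_group L" and b: "b \<in> Z1 L"
begin

lemma Lg': "\<And>n. group (obj L n)" using Lg[OF L] .

lemmas Ac = A_closed[OF Lg']
lemmas Ic = I_closed[OF Lg']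
lemmas Imult = I_mult[OF Lg']
lemmas Ione = I_one[OF Lg']
lemmas LbG = group_Lb_obj[OF Lg']

lemma bs: "1 \<le> n \<Longrightarrow> bseq L b n \<in> carrier (obj L n)" using B0[OF L b] .

lemma c0: "A L (Suc n) \<otimes>\<^bsub>Lb_obj L (Suc n)\<^esub> I L (Suc n) (bseq L b (Suc n)) \<in> carrier (Lb_obj L (Suc n))"
  using group.subgroup_self[OF LbG] Ac Ic bs by (simp add: monoid.m_closed[OF group.is_monoid[OF LbG]])

lemma phi0_hom: "free_lift (Lb_obj L (Suc n)) (\<lambda>_. A L (Suc n) \<otimes>\<^bsub>Lb_obj L (Suc n)\<^esub> I L (Suc n) (bseq L b (Suc n))) \<in> hom Fbar0 (Lb_obj L (Suc n))"
  by (rule free_lift_Fbar0_hom[OF Lg' LbG c0])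

lemma phi0_gen: "free_lift (Lb_obj L (Suc n)) (\<lambda>_. A L (Suc n) \<otimes>\<^bsub>Lb_obj L (Suc n)\<^esub> I L (Suc n) (bseq L b (Suc n))) (gen 0)
   = A L (Suc n) \<otimes>\<^bsub>Lb_obj L (Suc n)\<^esub> I L (Suc n) (bseq L b (Suc n))"
  by (rule free_lift_Fbar0_gen[OF Lg' LbG c0])

lemma Icomp_hom: "f \<in> hom G (obj L m) \<Longrightarrow> (\<lambda>y. I L m (f y)) \<in> hom G (Lb_obj L m)"
  using hom_compose[OF _ I_hom[OF Lg']] by (simp add: comp_def)

lemma inl_hom': "fp_inl Fbar0 (obj L n) \<in> hom Fbar0 (Lb_obj L n)"
  by (rule inl_hom[OF Lg'])

lemma inl_gen0: "fp_inl Fbar0 (obj L n) (gen 0) = A L n"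
  by (simp add: A_def)

lemma dB_hom: "i \<le> Suc n \<Longrightarrow> coface (Lb L b) n i \<in> hom (obj (Lb L b) n) (obj (Lb L b) (Suc n))"
  by (auto simp: Lb_simps intro!: fp_lift_Lb_hom[OF Lg' LbG] phi0_hom Icomp_hom Lcf[OF L] inl_hom')

lemma sB_hom: "i \<le> n \<Longrightarrow> codeg (Lb L b) n i \<in> hom (obj (Lb L b) (Suc n)) (obj (Lb L b) n)"
  by (auto simp: Lb_simps intro!: fp_lift_Lb_hom[OF Lg' LbG] Icomp_hom Lcd[OF L] inl_hom')

lemma dB_A: "i \<le> Suc n \<Longrightarrow> coface (Lb L b) n i (A L n) =
   (if i = 0 then A L (Suc n) \<otimes>\<^bsub>Lb_obj L (Suc n)\<^esub> I L (Suc n) (bseq L b (Suc n)) else A L (Suc n))"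
  by (auto simp: Lb_simps fp_lift_A[OF Lg' LbG] phi0_hom phi0_gen Icomp_hom Lcf[OF L] inl_hom' inl_gen0)

lemma dB_I: "i \<le> Suc n \<Longrightarrow> y \<in> carrier (obj L n) \<Longrightarrow> coface (Lb L b) n i (I L n y) = I L (Suc n) (coface L n i y)"
  by (auto simp: Lb_simps fp_lift_I[OF Lg' LbG] phi0_hom Icomp_hom Lcf[OF L] inl_hom')

lemma sB_A: "i \<le> n \<Longrightarrow> codeg (Lb L b) n i (A L (Suc n)) = A L n"
  by (auto simp: Lb_simps fp_lift_A[OF Lg' LbG] Icomp_hom Lcd[OF L] inl_hom' inl_gen0)

lemma sB_I: "i \<le> n \<Longrightarrow> y \<in> carrier (obj L (Suc n)) \<Longrightarrow> codeg (Lb L b) n i (I L (Suc n) y) = I L n (codeg L n i y)"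
  by (auto simp: Lb_simps fp_lift_I[OF Lg' LbG] Icomp_hom Lcd[OF L] inl_hom')

lemma dB_mult: "i \<le> Suc n \<Longrightarrow> x \<in> carrier (Lb_obj L n) \<Longrightarrow> y \<in> carrier (Lb_obj L n) \<Longrightarrow>
   coface (Lb L b) n i (x \<otimes>\<^bsub>Lb_obj L n\<^esub> y) = coface (Lb L b) n i x \<otimes>\<^bsub>Lb_obj L (Suc n)\<^esub> coface (Lb L b) n i y"
  using hom_mult[OF dB_hom] by (simp add: Lb_simps(1))

lemma sB_mult: "i \<le> n \<Longrightarrow> x \<in> carrier (Lb_obj L (Suc n)) \<Longrightarrow> y \<in> carrier (Lb_obj L (Suc n)) \<Longrightarrow>
   codeg (Lb L b) n i (x \<otimes>\<^bsub>Lb_obj L (Suc n)\<^esub> y) = codeg (Lb L b) n i x \<otimes>\<^bsub>Lb_obj L n\<^esub> codeg (Lb L b) n i y"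
  using hom_mult[OF sB_hom] by (simp add: Lb_simps(1))

lemmas LbU = Lb_unique[OF Lg' LbG]

end


context
  fixes L :: "'a cosimp" and b
  assumes L: "cosimp_group L" and b: "b \<in> Z1 L"
begin

lemmas dB_A' = dB_A[OF L b] and dB_I' = dB_I[OF L b] and sB_A' = sB_A[OF L b] and sB_I' = sB_I[OF L b]
  and dB_mult' = dB_mult[OF L b] and sB_mult' = sB_mult[OF L b] and dB_hom' = dB_hom[OF L b]
  and sB_hom' = sB_hom[OF L b] and Ac' = Ac[OF L b] and Ic' = Ic[OF L b] and bs' = bs[OF L b]
  and Imult' = Imult[OF L b] and Ione' = Ione[OF L b] and LbG' = LbG[OF L b] and LbU' = LbU[OF L b]
  and B1' = B1[OF L b] and B2' = B2[OF L b] and B3' = B3[OF L b] and B4' = B4[OF L b]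
  and Lcf_closed' = Lcf_closed[OF L] and Lcd_closed' = Lcd_closed[OF L]

lemma LbId1:
  assumes ij: "i < j" "j \<le> Suc (Suc n)" and x: "x \<in> carrier (Lb_obj L n)"
  shows "coface (Lb L b) (Suc n) j (coface (Lb L b) n i x) = coface (Lb L b) (Suc n) i (coface (Lb L b) n (j - 1) x)"
proof -
  have "(coface (Lb L b) (Suc n) j \<circ> coface (Lb L b) n i) x = (coface (Lb L b) (Suc n) i \<circ> coface (Lb L b) n (j - 1)) x"
  proof (rule LbU'[where f = "coface (Lb L b) (Suc n) j \<circ> coface (Lb L b) n i"
        and f' = "coface (Lb L b) (Suc n) i \<circ> coface (Lb L b) n (j - 1)"])
    show "coface (Lb L b) (Suc n) j \<circ> coface (Lb L b) n i \<in> hom (Lb_obj L n) (Lb_obj L (Suc (Suc n)))"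
      using hom_compose[OF dB_hom'[of i n] dB_hom'[of j "Suc n"]] ij by (simp add: Lb_simps)
    have "j - 1 \<le> Suc n" "i \<le> Suc (Suc n)" using ij by auto
    from hom_compose[OF dB_hom'[OF this(1)] dB_hom'[OF this(2)]]
    show "coface (Lb L b) (Suc n) i \<circ> coface (Lb L b) n (j - 1) \<in> hom (Lb_obj L n) (Lb_obj L (Suc (Suc n)))"
      by (simp add: Lb_simps)
    show "x \<in> carrier (Lb_obj L n)" by (rule x)
  next
    fix y assume y: "y \<in> carrier (obj L n)"
    have "j - 1 \<le> Suc n" "i \<le> Suc n" using ij by auto
    then show "(coface (Lb L b) (Suc n) j \<circ> coface (Lb L b) n i) (I L n y) = (coface (Lb L b) (Suc n) i \<circ> coface (Lb L b) n (j - 1)) (I L n y)"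
      using ij y by (simp add: dB_I' Lcf_closed' Lid1[OF L])
  next
    interpret G2: group "Lb_obj L (Suc (Suc n))" by (rule LbG')
    have bs1: "bseq L b (Suc n) \<in> carrier (obj L (Suc n))" by (rule bs') simp
    have bs2: "bseq L b (Suc (Suc n)) \<in> carrier (obj L (Suc (Suc n)))" by (rule bs') simp
    show "(coface (Lb L b) (Suc n) j \<circ> coface (Lb L b) n i) (A L n) = (coface (Lb L b) (Suc n) i \<circ> coface (Lb L b) n (j - 1)) (A L n)"
    proof (cases "i = 0")
      case False
      then show ?thesis using ij by (simp add: dB_A')
    next
      case True
      have lhs: "(coface (Lb L b) (Suc n) j \<circ> coface (Lb L b) n i) (A L n)
          = A L (Suc (Suc n)) \<otimes>\<^bsub>Lb_obj L (Suc (Suc n))\<^esub> I L (Suc (Suc n)) (coface L (Suc n) j (bseq L b (Suc n)))"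
        using True ij bs1 by (simp add: dB_A' dB_mult' Ac' Ic' dB_I')
      show ?thesis
      proof (cases "j = 1")
        case True
        have c: "coface L (Suc n) 0 (bseq L b (Suc n)) \<in> carrier (obj L (Suc (Suc n)))"
          using bs1 by (simp add: Lcf_closed')
        have "coface L (Suc n) j (bseq L b (Suc n)) = bseq L b (Suc (Suc n)) \<otimes>\<^bsub>obj L (Suc (Suc n))\<^esub> coface L (Suc n) 0 (bseq L b (Suc n))"
          using True B2'[of "Suc n"] by simp
        then have lhs': "(coface (Lb L b) (Suc n) j \<circ> coface (Lb L b) n i) (A L n)
          = A L (Suc (Suc n)) \<otimes>\<^bsub>Lb_obj L (Suc (Suc n))\<^esub> (I L (Suc (Suc n)) (bseq L b (Suc (Suc n))) \<otimes>\<^bsub>Lb_obj L (Suc (Suc n))\<^esub> I L (Suc (Suc n)) (coface L (Suc n) 0 (bseq L b (Suc n))))"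
          using lhs Imult' bs2 c by simp
        have rhs: "(coface (Lb L b) (Suc n) i \<circ> coface (Lb L b) n (j - 1)) (A L n)
          = A L (Suc (Suc n)) \<otimes>\<^bsub>Lb_obj L (Suc (Suc n))\<^esub> I L (Suc (Suc n)) (bseq L b (Suc (Suc n))) \<otimes>\<^bsub>Lb_obj L (Suc (Suc n))\<^esub> I L (Suc (Suc n)) (coface L (Suc n) 0 (bseq L b (Suc n)))"
          using \<open>i = 0\<close> True bs1 by (simp add: dB_A' dB_mult' Ac' Ic' dB_I')
        show ?thesis using lhs' rhs Ac' Ic' bs2 c by (simp add: G2.m_assoc)
      next
        case False
        then have "coface L (Suc n) j (bseq L b (Suc n)) = bseq L b (Suc (Suc n))"
          using ij B1'[of "Suc n" j] by simp
        then show ?thesis using lhs \<open>i = 0\<close> False ij by (simp add: dB_A')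
      qed
    qed
  qed
  then show ?thesis by simp
qed

lemma LbId2:
  assumes ij: "i < j" "j \<le> Suc n" and x: "x \<in> carrier (Lb_obj L (Suc n))"
  shows "codeg (Lb L b) (Suc n) j (coface (Lb L b) (Suc n) i x) = coface (Lb L b) n i (codeg (Lb L b) n (j - 1) x)"
proof -
  have "(codeg (Lb L b) (Suc n) j \<circ> coface (Lb L b) (Suc n) i) x = (coface (Lb L b) n i \<circ> codeg (Lb L b) n (j - 1)) x"
  proof (rule LbU'[where f = "codeg (Lb L b) (Suc n) j \<circ> coface (Lb L b) (Suc n) i"
        and f' = "coface (Lb L b) n i \<circ> codeg (Lb L b) n (j - 1)"])
    have "i \<le> Suc (Suc n)" "j \<le> Suc n" using ij by auto
    from hom_compose[OF dB_hom'[OF this(1)] sB_hom'[OF this(2)]]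
    show "codeg (Lb L b) (Suc n) j \<circ> coface (Lb L b) (Suc n) i \<in> hom (Lb_obj L (Suc n)) (Lb_obj L (Suc n))"
      by (simp add: Lb_simps)
    have "j - 1 \<le> n" "i \<le> Suc n" using ij by auto
    from hom_compose[OF sB_hom'[OF this(1)] dB_hom'[OF this(2)]]
    show "coface (Lb L b) n i \<circ> codeg (Lb L b) n (j - 1) \<in> hom (Lb_obj L (Suc n)) (Lb_obj L (Suc n))"
      by (simp add: Lb_simps)
    show "x \<in> carrier (Lb_obj L (Suc n))" by (rule x)
  next
    fix y assume y: "y \<in> carrier (obj L (Suc n))"
    have "j - 1 \<le> n" "i \<le> Suc n" "i \<le> Suc (Suc n)" using ij by auto
    then show "(codeg (Lb L b) (Suc n) j \<circ> coface (Lb L b) (Suc n) i) (I L (Suc n) y) = (coface (Lb L b) n i \<circ> codeg (Lb L b) n (j - 1)) (I L (Suc n) y)"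
      using ij y by (simp add: dB_I' sB_I' Lcf_closed' Lcd_closed' Lid2[OF L])
  next
    have bs1: "bseq L b (Suc n) \<in> carrier (obj L (Suc n))" by (rule bs') simp
    have bs2: "bseq L b (Suc (Suc n)) \<in> carrier (obj L (Suc (Suc n)))" by (rule bs') simp
    show "(codeg (Lb L b) (Suc n) j \<circ> coface (Lb L b) (Suc n) i) (A L (Suc n)) = (coface (Lb L b) n i \<circ> codeg (Lb L b) n (j - 1)) (A L (Suc n))"
    proof (cases "i = 0")
      case False
      then show ?thesis using ij by (simp add: dB_A' sB_A')
    next
      case True
      have "codeg L (Suc n) j (bseq L b (Suc (Suc n))) = bseq L b (Suc n)"
        using B3'[of j "Suc n"] ij True by simp
      then show ?thesis using True ij bs1 bs2 by (simp add: dB_A' sB_A' sB_mult' Ac' Ic' sB_I')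
    qed
  qed
  then show ?thesis by simp
qed

lemma LbId3:
  assumes j: "j \<le> n" and x: "x \<in> carrier (Lb_obj L n)"
  shows "codeg (Lb L b) n j (coface (Lb L b) n j x) = x \<and> codeg (Lb L b) n j (coface (Lb L b) n (Suc j) x) = x"
proof
  have "(codeg (Lb L b) n j \<circ> coface (Lb L b) n j) x = (\<lambda>x. x) x"
  proof (rule LbU'[where f = "codeg (Lb L b) n j \<circ> coface (Lb L b) n j" and f' = "\<lambda>x. x"])
    have "j \<le> Suc n" "j \<le> n" using j by auto
    from hom_compose[OF dB_hom'[OF this(1)] sB_hom'[OF this(2)]]
    show "codeg (Lb L b) n j \<circ> coface (Lb L b) n j \<in> hom (Lb_obj L n) (Lb_obj L n)"
      by (simp add: Lb_simps)
    show "(\<lambda>x. x) \<in> hom (Lb_obj L n) (Lb_obj L n)" by (rule id_hom')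
    show "x \<in> carrier (Lb_obj L n)" by (rule x)
  next
    fix y assume y: "y \<in> carrier (obj L n)"
    then show "(codeg (Lb L b) n j \<circ> coface (Lb L b) n j) (I L n y) = (I L n y)"
      using j by (simp add: dB_I' sB_I' Lcf_closed' Lid3[OF L])
  next
    interpret G: group "Lb_obj L n" by (rule LbG')
    have bs1: "bseq L b (Suc n) \<in> carrier (obj L (Suc n))" by (rule bs') simp
    show "(codeg (Lb L b) n j \<circ> coface (Lb L b) n j) (A L n) = A L n"
    proof (cases "j = 0")
      case False
      then show ?thesis using j by (simp add: dB_A' sB_A')
    next
      case True
      then show ?thesis using j bs1 B4'[of n] Ac'
        by (simp add: dB_A' sB_A' sB_mult' Ac' Ic' sB_I' Ione')
    qed
  qed
  then show "codeg (Lb L b) n j (coface (Lb L b) n j x) = x" by simp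
next
  have "(codeg (Lb L b) n j \<circ> coface (Lb L b) n (Suc j)) x = (\<lambda>x. x) x"
  proof (rule LbU'[where f = "codeg (Lb L b) n j \<circ> coface (Lb L b) n (Suc j)" and f' = "\<lambda>x. x"])
    have "Suc j \<le> Suc n" "j \<le> n" using j by auto
    from hom_compose[OF dB_hom'[OF this(1)] sB_hom'[OF this(2)]]
    show "codeg (Lb L b) n j \<circ> coface (Lb L b) n (Suc j) \<in> hom (Lb_obj L n) (Lb_obj L n)"
      by (simp add: Lb_simps)
    show "(\<lambda>x. x) \<in> hom (Lb_obj L n) (Lb_obj L n)" by (rule id_hom')
    show "x \<in> carrier (Lb_obj L n)" by (rule x)
  next
    fix y assume y: "y \<in> carrier (obj L n)"
    then show "(codeg (Lb L b) n j \<circ> coface (Lb L b) n (Suc j)) (I L n y) = (I L n y)"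
      using j by (simp add: dB_I' sB_I' Lcf_closed' Lid3[OF L])
  next
    show "(codeg (Lb L b) n j \<circ> coface (Lb L b) n (Suc j)) (A L n) = A L n"
      using j by (simp add: dB_A' sB_A')
  qed
  then show "codeg (Lb L b) n j (coface (Lb L b) n (Suc j) x) = x" by simp
qed

lemma LbId4:
  assumes ij: "Suc j < i" "i \<le> Suc (Suc n)" and x: "x \<in> carrier (Lb_obj L (Suc n))"
  shows "codeg (Lb L b) (Suc n) j (coface (Lb L b) (Suc n) i x) = coface (Lb L b) n (i - 1) (codeg (Lb L b) n j x)"
proof -
  have "(codeg (Lb L b) (Suc n) j \<circ> coface (Lb L b) (Suc n) i) x = (coface (Lb L b) n (i - 1) \<circ> codeg (Lb L b) n j) x"
  proof (rule LbU'[where f = "codeg (Lb L b) (Suc n) j \<circ> coface (Lb L b) (Suc n) i"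
        and f' = "coface (Lb L b) n (i - 1) \<circ> codeg (Lb L b) n j"])
    have "i \<le> Suc (Suc n)" "j \<le> Suc n" using ij by auto
    from hom_compose[OF dB_hom'[OF this(1)] sB_hom'[OF this(2)]]
    show "codeg (Lb L b) (Suc n) j \<circ> coface (Lb L b) (Suc n) i \<in> hom (Lb_obj L (Suc n)) (Lb_obj L (Suc n))"
      by (simp add: Lb_simps)
    have "j \<le> n" "i - 1 \<le> Suc n" using ij by auto
    from hom_compose[OF sB_hom'[OF this(1)] dB_hom'[OF this(2)]]
    show "coface (Lb L b) n (i - 1) \<circ> codeg (Lb L b) n j \<in> hom (Lb_obj L (Suc n)) (Lb_obj L (Suc n))"
      by (simp add: Lb_simps)
    show "x \<in> carrier (Lb_obj L (Suc n))" by (rule x)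
  next
    fix y assume y: "y \<in> carrier (obj L (Suc n))"
    have "j \<le> n" "i - 1 \<le> Suc n" "j \<le> Suc n" using ij by auto
    then show "(codeg (Lb L b) (Suc n) j \<circ> coface (Lb L b) (Suc n) i) (I L (Suc n) y) = (coface (Lb L b) n (i - 1) \<circ> codeg (Lb L b) n j) (I L (Suc n) y)"
      using ij y by (simp add: dB_I' sB_I' Lcf_closed' Lcd_closed' Lid4[OF L])
  next
    show "(codeg (Lb L b) (Suc n) j \<circ> coface (Lb L b) (Suc n) i) (A L (Suc n)) = (coface (Lb L b) n (i - 1) \<circ> codeg (Lb L b) n j) (A L (Suc n))"
      using ij by (simp add: dB_A' sB_A')
  qed
  then show ?thesis by simp
qed

lemma LbId5:
  assumes ij: "i \<le> j" "j \<le> n" and x: "x \<in> carrier (Lb_obj L (Suc (Suc n)))"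
  shows "codeg (Lb L b) n j (codeg (Lb L b) (Suc n) i x) = codeg (Lb L b) n i (codeg (Lb L b) (Suc n) (Suc j) x)"
proof -
  have "(codeg (Lb L b) n j \<circ> codeg (Lb L b) (Suc n) i) x = (codeg (Lb L b) n i \<circ> codeg (Lb L b) (Suc n) (Suc j)) x"
  proof (rule LbU'[where f = "codeg (Lb L b) n j \<circ> codeg (Lb L b) (Suc n) i"
        and f' = "codeg (Lb L b) n i \<circ> codeg (Lb L b) (Suc n) (Suc j)"])
    have "i \<le> Suc n" "j \<le> n" using ij by auto
    from hom_compose[OF sB_hom'[OF this(1)] sB_hom'[OF this(2)]]
    show "codeg (Lb L b) n j \<circ> codeg (Lb L b) (Suc n) i \<in> hom (Lb_obj L (Suc (Suc n))) (Lb_obj L n)"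
      by (simp add: Lb_simps)
    have "Suc j \<le> Suc n" "i \<le> n" using ij by auto
    from hom_compose[OF sB_hom'[OF this(1)] sB_hom'[OF this(2)]]
    show "codeg (Lb L b) n i \<circ> codeg (Lb L b) (Suc n) (Suc j) \<in> hom (Lb_obj L (Suc (Suc n))) (Lb_obj L n)"
      by (simp add: Lb_simps)
    show "x \<in> carrier (Lb_obj L (Suc (Suc n)))" by (rule x)
  next
    fix y assume y: "y \<in> carrier (obj L (Suc (Suc n)))"
    have "i \<le> Suc n" "j \<le> n" "Suc j \<le> Suc n" "i \<le> n" using ij by auto
    then show "(codeg (Lb L b) n j \<circ> codeg (Lb L b) (Suc n) i) (I L (Suc (Suc n)) y) = (codeg (Lb L b) n i \<circ> codeg (Lb L b) (Suc n) (Suc j)) (I L (Suc (Suc n)) y)"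
      using ij y by (simp add: sB_I' Lcd_closed' Lid5[OF L])
  next
    show "(codeg (Lb L b) n j \<circ> codeg (Lb L b) (Suc n) i) (A L (Suc (Suc n))) = (codeg (Lb L b) n i \<circ> codeg (Lb L b) (Suc n) (Suc j)) (A L (Suc (Suc n)))"
      using ij by (simp add: sB_A')
  qed
  then show ?thesis by simp
qed

lemma cosimp_group_Lb: "cosimp_group (Lb L b)"
  unfolding cosimp_group_def
proof (intro conjI allI impI)
  show "\<And>n. group (obj (Lb L b) n)" by (simp add: Lb_simps LbG')
qed (auto simp: Lb_simps(1) intro: dB_hom'[unfolded Lb_simps(1)] sB_hom'[unfolded Lb_simps(1)] LbId1[unfolded One_nat_def] LbId2[unfolded One_nat_def] LbId4[unfolded One_nat_def] LbId5 dest: LbId3)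

lemma cosimp_hom_iota: "cosimp_hom L (Lb L b) (iota L)"
  unfolding cosimp_hom_def
proof (intro conjI allI impI)
  show "\<And>n. iota L n \<in> hom (obj L n) (obj (Lb L b) n)"
    using I_hom[OF Lg'[OF L b]] by (simp add: Lb_simps iota_def I_def)
qed (auto simp: iota_def dB_I'[unfolded I_def] sB_I'[unfolded I_def])


end


lemma chom_hom: "cosimp_hom X Y f \<Longrightarrow> f n \<in> hom (obj X n) (obj Y n)"
  by (simp add: cosimp_hom_def)

lemma chom_cf: "cosimp_hom X Y f \<Longrightarrow> i \<le> Suc n \<Longrightarrow> x \<in> carrier (obj X n) \<Longrightarrow>
   f (Suc n) (coface X n i x) = coface Y n i (f n x)"
  by (simp add: cosimp_hom_def)

lemma chom_cd: "cosimp_hom X Y f \<Longrightarrow> i \<le> n \<Longrightarrow> x \<in> carrier (obj X (Suc n)) \<Longrightarrow>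
   f n (codeg X n i x) = codeg Y n i (f (Suc n) x)"
  by (simp add: cosimp_hom_def)

lemma FcsG: "\<And>n. group (obj Fcs n)" using Lg[OF cosimp_group_Fcs] .

lemma Fplus_eq: "Fplus = Lb Fcs (gen 1)" by (simp add: Fplus_def)

lemmas FdA = dB_A[OF cosimp_group_Fcs gen1_Z1, folded Fplus_eq]
  and FdI = dB_I[OF cosimp_group_Fcs gen1_Z1, folded Fplus_eq]
  and FsA = sB_A[OF cosimp_group_Fcs gen1_Z1, folded Fplus_eq]
  and FsI = sB_I[OF cosimp_group_Fcs gen1_Z1, folded Fplus_eq]
  and Fbs = bs[OF cosimp_group_Fcs gen1_Z1]

context
  fixes L :: "'a cosimp" and b and h
  assumes L: "cosimp_group L" and b: "b \<in> Z1 L" and h: "cosimp_hom Fcs L h" and hb: "h 1 (gen 1) = b"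
begin

lemma hbs: "1 \<le> n \<Longrightarrow> h n (bseq Fcs (gen 1) n) = bseq L b n"
proof (induction n)
  case 0 then show ?case by simp
next
  case (Suc m)
  show ?case
  proof (cases m)
    case 0 then show ?thesis using hb by simp
  next
    case (Suc k)
    then have m1: "1 \<le> m" by simp
    have "h (Suc m) (bseq Fcs (gen 1) (Suc m)) = h (Suc m) (coface Fcs m (Suc m) (bseq Fcs (gen 1) m))"
      using bseq_Suc[OF cosimp_group_Fcs gen1_Z1 m1] by simp
    also have "\<dots> = coface L m (Suc m) (h m (bseq Fcs (gen 1) m))"
      using chom_cf[OF h, of "Suc m" m] Fbs[OF m1] by simp
    also have "\<dots> = bseq L b (Suc m)" using Suc.IH[OF m1] bseq_Suc[OF L b m1] by simp
    finally show ?thesis .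
  qed
qed

lemma hn_hom: "h n \<in> hom (obj Fcs n) (obj L n)" by (rule chom_hom[OF h])

lemma idstar_hom: "idstar L h n \<in> hom (obj Fplus n) (obj (Lb L b) n)"
  unfolding idstar_def Fplus_eq Lb_simps(1)
  using fp_lift_Lb_hom[OF FcsG LbG[OF L b] inl_hom[OF Lg'[OF L b]] Icomp_hom[OF L b hn_hom]]
  by (simp add: I_def)

lemma idstar_A: "idstar L h n (A Fcs n) = A L n"
  unfolding idstar_def
  using fp_lift_A[OF FcsG LbG[OF L b] inl_hom[OF Lg'[OF L b]] Icomp_hom[OF L b hn_hom]]
  by (simp add: I_def A_def)

lemma idstar_I: "y \<in> carrier (obj Fcs n) \<Longrightarrow> idstar L h n (I Fcs n y) = I L n (h n y)"
  unfolding idstar_def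
  using fp_lift_I[OF FcsG LbG[OF L b] inl_hom[OF Lg'[OF L b]] Icomp_hom[OF L b hn_hom]]
  by (simp add: I_def)

lemma idstar_mult: "x \<in> carrier (Lb_obj Fcs n) \<Longrightarrow> y \<in> carrier (Lb_obj Fcs n) \<Longrightarrow>
  idstar L h n (x \<otimes>\<^bsub>Lb_obj Fcs n\<^esub> y) = idstar L h n x \<otimes>\<^bsub>Lb_obj L n\<^esub> idstar L h n y"
  using hom_mult[OF idstar_hom] by (simp add: Fplus_eq Lb_simps)

lemma hc: "y \<in> carrier (obj Fcs n) \<Longrightarrow> h n y \<in> carrier (obj L n)"
  using hom_in_carrier[OF hn_hom] by blast

lemma idstar_chom: "cosimp_hom Fplus (Lb L b) (idstar L h)"
  unfolding cosimp_hom_def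
proof (intro conjI allI impI)
  show "\<And>n. idstar L h n \<in> hom (obj Fplus n) (obj (Lb L b) n)" by (rule idstar_hom)
next
  fix n i x assume a: "i \<le> Suc n \<and> x \<in> carrier (obj Fplus n)"
  have "(idstar L h (Suc n) \<circ> coface Fplus n i) x = (coface (Lb L b) n i \<circ> idstar L h n) x"
  proof (rule Lb_unique[OF FcsG LbG[OF L b], where f = "idstar L h (Suc n) \<circ> coface Fplus n i"
        and f' = "coface (Lb L b) n i \<circ> idstar L h n"])
    show "idstar L h (Suc n) \<circ> coface Fplus n i \<in> hom (Lb_obj Fcs n) (Lb_obj L (Suc n))"
      using hom_compose[OF dB_hom[OF cosimp_group_Fcs gen1_Z1, folded Fplus_eq] idstar_hom] a
      by (simp add: Fplus_eq Lb_simps)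
    show "coface (Lb L b) n i \<circ> idstar L h n \<in> hom (Lb_obj Fcs n) (Lb_obj L (Suc n))"
      using hom_compose[OF idstar_hom dB_hom[OF L b]] a
      by (simp add: Fplus_eq Lb_simps)
    show "x \<in> carrier (Lb_obj Fcs n)" using a by (simp add: Fplus_eq Lb_simps)
  next
    fix y assume y: "y \<in> carrier (obj Fcs n)"
    show "(idstar L h (Suc n) \<circ> coface Fplus n i) (I Fcs n y) = (coface (Lb L b) n i \<circ> idstar L h n) (I Fcs n y)"
      using a y by (simp add: FdI idstar_I dB_I[OF L b] hc Lcf_closed[OF cosimp_group_Fcs] chom_cf[OF h] del: Fcs_simps)
  next
    have bs1: "bseq Fcs (gen 1) (Suc n) \<in> carrier (obj Fcs (Suc n))" by (rule Fbs) simp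
    show "(idstar L h (Suc n) \<circ> coface Fplus n i) (A Fcs n) = (coface (Lb L b) n i \<circ> idstar L h n) (A Fcs n)"
      using a bs1 hbs[of "Suc n"]
      by (simp add: FdA dB_A[OF L b] idstar_A idstar_mult Ac[OF cosimp_group_Fcs gen1_Z1] Ic[OF cosimp_group_Fcs gen1_Z1] idstar_I)
  qed
  then show "idstar L h (Suc n) (coface Fplus n i x) = coface (Lb L b) n i (idstar L h n x)" by simp
next
  fix n i x assume a: "i \<le> n \<and> x \<in> carrier (obj Fplus (Suc n))"
  have "(idstar L h n \<circ> codeg Fplus n i) x = (codeg (Lb L b) n i \<circ> idstar L h (Suc n)) x"
  proof (rule Lb_unique[OF FcsG LbG[OF L b], where f = "idstar L h n \<circ> codeg Fplus n i"
        and f' = "codeg (Lb L b) n i \<circ> idstar L h (Suc n)"])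
    show "idstar L h n \<circ> codeg Fplus n i \<in> hom (Lb_obj Fcs (Suc n)) (Lb_obj L n)"
      using hom_compose[OF sB_hom[OF cosimp_group_Fcs gen1_Z1, folded Fplus_eq] idstar_hom] a
      by (simp add: Fplus_eq Lb_simps)
    show "codeg (Lb L b) n i \<circ> idstar L h (Suc n) \<in> hom (Lb_obj Fcs (Suc n)) (Lb_obj L n)"
      using hom_compose[OF idstar_hom sB_hom[OF L b]] a
      by (simp add: Fplus_eq Lb_simps)
    show "x \<in> carrier (Lb_obj Fcs (Suc n))" using a by (simp add: Fplus_eq Lb_simps)
  next
    fix y assume y: "y \<in> carrier (obj Fcs (Suc n))"
    show "(idstar L h n \<circ> codeg Fplus n i) (I Fcs (Suc n) y) = (codeg (Lb L b) n i \<circ> idstar L h (Suc n)) (I Fcs (Suc n) y)"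
      using a y by (simp add: FsI idstar_I sB_I[OF L b] hc Lcd_closed[OF cosimp_group_Fcs] chom_cd[OF h] del: Fcs_simps)
  next
    show "(idstar L h n \<circ> codeg Fplus n i) (A Fcs (Suc n)) = (codeg (Lb L b) n i \<circ> idstar L h (Suc n)) (A Fcs (Suc n))"
      using a by (simp add: FsA sB_A[OF L b] idstar_A)
  qed
  then show "idstar L h n (codeg Fplus n i x) = codeg (Lb L b) n i (idstar L h (Suc n) x)" by simp
qed

end


definition uu :: "'m cosimp \<Rightarrow> (nat \<Rightarrow> ((nat \<times> bool) list + (nat \<times> bool) list) list \<Rightarrow> 'm) \<Rightarrow> (nat \<Rightarrow> 'a \<Rightarrow> 'm)
   \<Rightarrow> nat \<Rightarrow> ((nat \<times> bool) list + 'a) list \<Rightarrow> 'm" where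
  "uu M f g n = fp_lift (obj M n) (\<lambda>w. f n (fp_inl Fbar0 (obj Fcs n) w)) (g n)"

context
  fixes L :: "'a cosimp" and b and h and M :: "'m cosimp" and f g
  assumes L: "cosimp_group L" and b: "b \<in> Z1 L" and h: "cosimp_hom Fcs L h" and hb: "h 1 (gen 1) = b"
    and M: "cosimp_group M" and f: "cosimp_hom Fplus M f" and g: "cosimp_hom L M g"
    and fg: "\<forall>n. \<forall>x\<in>carrier (obj Fcs n). f n (iota_plus n x) = g n (h n x)"
begin

lemma MG: "group (obj M n)" by (rule Lg[OF M])

lemma fn_hom: "f n \<in> hom (Lb_obj Fcs n) (obj M n)"
  using chom_hom[OF f] by (simp add: Fplus_eq Lb_simps)

lemma gn_hom: "g n \<in> hom (obj L n) (obj M n)"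
  using chom_hom[OF g] .

lemma phiM_hom: "(\<lambda>w. f n (fp_inl Fbar0 (obj Fcs n) w)) \<in> hom Fbar0 (obj M n)"
  using hom_compose[OF inl_hom[OF FcsG] fn_hom] by (simp add: comp_def)

lemma u_hom: "uu M f g n \<in> hom (Lb_obj L n) (obj M n)"
  unfolding uu_def by (rule fp_lift_Lb_hom[OF Lg'[OF L b] MG phiM_hom gn_hom])

lemma u_A: "uu M f g n (A L n) = f n (A Fcs n)"
  unfolding uu_def using fp_lift_A[OF Lg'[OF L b] MG phiM_hom gn_hom] by (simp add: A_def)

lemma u_I: "y \<in> carrier (obj L n) \<Longrightarrow> uu M f g n (I L n y) = g n y"
  unfolding uu_def using fp_lift_I[OF Lg'[OF L b] MG phiM_hom gn_hom] by simp

lemma f_I: "y \<in> carrier (obj Fcs n) \<Longrightarrow> f n (I Fcs n y) = g n (h n y)"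
  using fg by (simp add: iota_plus_def iota_def I_def)

lemma f_mult: "x \<in> carrier (Lb_obj Fcs n) \<Longrightarrow> y \<in> carrier (Lb_obj Fcs n) \<Longrightarrow>
   f n (x \<otimes>\<^bsub>Lb_obj Fcs n\<^esub> y) = f n x \<otimes>\<^bsub>obj M n\<^esub> f n y"
  using hom_mult[OF fn_hom] by blast

lemma u_mult: "x \<in> carrier (Lb_obj L n) \<Longrightarrow> y \<in> carrier (Lb_obj L n) \<Longrightarrow>
   uu M f g n (x \<otimes>\<^bsub>Lb_obj L n\<^esub> y) = uu M f g n x \<otimes>\<^bsub>obj M n\<^esub> uu M f g n y"
  using hom_mult[OF u_hom] by blast

lemma f_cf: "i \<le> Suc n \<Longrightarrow> x \<in> carrier (Lb_obj Fcs n) \<Longrightarrow>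
   f (Suc n) (coface (Lb Fcs (gen 1)) n i x) = coface M n i (f n x)"
  using chom_cf[OF f] by (simp add: Fplus_eq Lb_simps(1))

lemma f_cd: "i \<le> n \<Longrightarrow> x \<in> carrier (Lb_obj Fcs (Suc n)) \<Longrightarrow>
   f n (codeg (Lb Fcs (gen 1)) n i x) = codeg M n i (f (Suc n) x)"
  using chom_cd[OF f] by (simp add: Fplus_eq Lb_simps(1))

lemmas FA = Ac[OF cosimp_group_Fcs gen1_Z1] and FI = Ic[OF cosimp_group_Fcs gen1_Z1]
lemmas dA_F = dB_A[OF cosimp_group_Fcs gen1_Z1] and sA_F = sB_A[OF cosimp_group_Fcs gen1_Z1]

lemma u_chom: "cosimp_hom (Lb L b) M (uu M f g)"
  unfolding cosimp_hom_def
proof (intro conjI allI impI)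
  show "\<And>n. uu M f g n \<in> hom (obj (Lb L b) n) (obj M n)" using u_hom by (simp add: Lb_simps)
next
  fix n i x assume a: "i \<le> Suc n \<and> x \<in> carrier (obj (Lb L b) n)"
  have "(uu M f g (Suc n) \<circ> coface (Lb L b) n i) x = (coface M n i \<circ> uu M f g n) x"
  proof (rule Lb_unique[OF Lg'[OF L b] MG, where f = "uu M f g (Suc n) \<circ> coface (Lb L b) n i"
        and f' = "coface M n i \<circ> uu M f g n"])
    show "uu M f g (Suc n) \<circ> coface (Lb L b) n i \<in> hom (Lb_obj L n) (obj M (Suc n))"
      using hom_compose[OF dB_hom[OF L b, unfolded Lb_simps(1)] u_hom] a by (simp add: Lb_simps)
    show "coface M n i \<circ> uu M f g n \<in> hom (Lb_obj L n) (obj M (Suc n))"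
      using hom_compose[OF u_hom Lcf[OF M]] a by simp
    show "x \<in> carrier (Lb_obj L n)" using a by (simp add: Lb_simps)
  next
    fix y assume y: "y \<in> carrier (obj L n)"
    show "(uu M f g (Suc n) \<circ> coface (Lb L b) n i) (I L n y) = (coface M n i \<circ> uu M f g n) (I L n y)"
      using a y by (simp add: dB_I[OF L b] u_I Lcf_closed[OF L] chom_cf[OF g])
  next
    have bs1: "bseq L b (Suc n) \<in> carrier (obj L (Suc n))" by (rule bs[OF L b]) simp
    have bsF: "bseq Fcs (gen 1) (Suc n) \<in> carrier (obj Fcs (Suc n))" by (rule Fbs) simp
    show "(uu M f g (Suc n) \<circ> coface (Lb L b) n i) (A L n) = (coface M n i \<circ> uu M f g n) (A L n)"
    proof (cases "i = 0")
      case True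
      have "coface M n i (f n (A Fcs n)) = f (Suc n) (coface (Lb Fcs (gen 1)) n i (A Fcs n))"
        using f_cf[of i n "A Fcs n"] a FA by simp
      also have "\<dots> = f (Suc n) (A Fcs (Suc n)) \<otimes>\<^bsub>obj M (Suc n)\<^esub> g (Suc n) (bseq L b (Suc n))"
      proof -
        have e: "coface (Lb Fcs (gen 1)) n i (A Fcs n) = A Fcs (Suc n) \<otimes>\<^bsub>Lb_obj Fcs (Suc n)\<^esub> I Fcs (Suc n) (bseq Fcs (gen 1) (Suc n))"
          using dA_F[of i n] True by simp
        show ?thesis unfolding e
          using bsF hbs[OF L b h hb, of "Suc n"] FA FI[OF bsF] by (simp add: f_mult f_I del: Fcs_simps)
      qed
      finally show ?thesis using True bs1 by (simp add: dB_A[OF L b] u_mult Ac[OF L b] Ic[OF L b] u_A u_I)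
    next
      case False
      have e: "coface (Lb Fcs (gen 1)) n i (A Fcs n) = A Fcs (Suc n)"
        using dA_F[of i n] False a by simp
      have "f (Suc n) (A Fcs (Suc n)) = coface M n i (f n (A Fcs n))"
        using f_cf[of i n "A Fcs n"] FA a unfolding e by simp
      then show ?thesis using a False by (simp add: dB_A[OF L b] u_A)
    qed
  qed
  then show "uu M f g (Suc n) (coface (Lb L b) n i x) = coface M n i (uu M f g n x)" by simp
next
  fix n i x assume a: "i \<le> n \<and> x \<in> carrier (obj (Lb L b) (Suc n))"
  have "(uu M f g n \<circ> codeg (Lb L b) n i) x = (codeg M n i \<circ> uu M f g (Suc n)) x"
  proof (rule Lb_unique[OF Lg'[OF L b] MG, where f = "uu M f g n \<circ> codeg (Lb L b) n i"
        and f' = "codeg M n i \<circ> uu M f g (Suc n)"])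
    show "uu M f g n \<circ> codeg (Lb L b) n i \<in> hom (Lb_obj L (Suc n)) (obj M n)"
      using hom_compose[OF sB_hom[OF L b, unfolded Lb_simps(1)] u_hom] a by (simp add: Lb_simps)
    show "codeg M n i \<circ> uu M f g (Suc n) \<in> hom (Lb_obj L (Suc n)) (obj M n)"
      using hom_compose[OF u_hom Lcd[OF M]] a by simp
    show "x \<in> carrier (Lb_obj L (Suc n))" using a by (simp add: Lb_simps)
  next
    fix y assume y: "y \<in> carrier (obj L (Suc n))"
    show "(uu M f g n \<circ> codeg (Lb L b) n i) (I L (Suc n) y) = (codeg M n i \<circ> uu M f g (Suc n)) (I L (Suc n) y)"
      using a y by (simp add: sB_I[OF L b] u_I Lcd_closed[OF L] chom_cd[OF g])
  next
    show "(uu M f g n \<circ> codeg (Lb L b) n i) (A L (Suc n)) = (codeg M n i \<circ> uu M f g (Suc n)) (A L (Suc n))"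
    proof -
      have e: "codeg (Lb Fcs (gen 1)) n i (A Fcs (Suc n)) = A Fcs n"
        using sA_F[of i n] a by simp
      have "f n (A Fcs n) = codeg M n i (f (Suc n) (A Fcs (Suc n)))"
        using f_cd[of i n "A Fcs (Suc n)"] FA a unfolding e by simp
      then show ?thesis using a by (simp add: sB_A[OF L b] u_A)
    qed
  qed
  then show "uu M f g n (codeg (Lb L b) n i x) = codeg M n i (uu M f g (Suc n) x)" by simp
qed

lemma u_idstar: "x \<in> carrier (obj Fplus n) \<Longrightarrow> uu M f g n (idstar L h n x) = f n x"
proof -
  assume x: "x \<in> carrier (obj Fplus n)"
  have "(uu M f g n \<circ> idstar L h n) x = f n x"
  proof (rule Lb_unique[OF FcsG MG, where f = "uu M f g n \<circ> idstar L h n" and f' = "f n"])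
    show "uu M f g n \<circ> idstar L h n \<in> hom (Lb_obj Fcs n) (obj M n)"
      using hom_compose[OF idstar_hom[OF L b h hb, unfolded Lb_simps(1)] u_hom] by (simp add: Fplus_eq Lb_simps)
    show "f n \<in> hom (Lb_obj Fcs n) (obj M n)" by (rule fn_hom)
    show "x \<in> carrier (Lb_obj Fcs n)" using x by (simp add: Fplus_eq Lb_simps)
  next
    fix y assume y: "y \<in> carrier (obj Fcs n)"
    show "(uu M f g n \<circ> idstar L h n) (I Fcs n y) = f n (I Fcs n y)"
      using y by (simp add: idstar_I[OF L b h hb] u_I hc[OF L b h hb] f_I del: Fcs_simps)
  next
    show "(uu M f g n \<circ> idstar L h n) (A Fcs n) = f n (A Fcs n)"
      by (simp add: idstar_A[OF L b h hb] u_A)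
  qed
  then show ?thesis by simp
qed

lemma u_iota: "x \<in> carrier (obj L n) \<Longrightarrow> uu M f g n (iota L n x) = g n x"
  by (simp add: iota_def u_I[unfolded I_def])

lemma u_unique:
  assumes u': "cosimp_hom (Lb L b) M u'"
    and e1: "\<forall>n. \<forall>x\<in>carrier (obj Fplus n). u' n (idstar L h n x) = f n x"
    and e2: "\<forall>n. \<forall>x\<in>carrier (obj L n). u' n (iota L n x) = g n x"
  shows "\<forall>n. \<forall>x\<in>carrier (obj (Lb L b) n). u' n x = uu M f g n x"
proof (intro allI ballI)
  fix n x assume x: "x \<in> carrier (obj (Lb L b) n)"
  show "u' n x = uu M f g n x"
  proof (rule Lb_unique[OF Lg'[OF L b] MG, where f = "u' n" and f' = "uu M f g n"])
    show "u' n \<in> hom (Lb_obj L n) (obj M n)" using chom_hom[OF u'] by (simp add: Lb_simps)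
    show "uu M f g n \<in> hom (Lb_obj L n) (obj M n)" by (rule u_hom)
    show "x \<in> carrier (Lb_obj L n)" using x by (simp add: Lb_simps)
  next
    fix y assume y: "y \<in> carrier (obj L n)"
    show "u' n (I L n y) = uu M f g n (I L n y)" using e2 y by (simp add: iota_def I_def u_I[unfolded I_def])
  next
    have "A Fcs n \<in> carrier (obj Fplus n)" using FA by (simp add: Fplus_eq Lb_simps)
    then have "u' n (idstar L h n (A Fcs n)) = f n (A Fcs n)" using e1 by blast
    then show "u' n (A L n) = uu M f g n (A L n)" by (simp add: idstar_A[OF L b h hb] u_A)
  qed
qed

end


theorem proposition3p4:
  fixes L :: "'a cosimp" and b :: 'a and h :: "nat \<Rightarrow> (nat \<times> bool) list \<Rightarrow> 'a"
  assumes L: "cosimp_group L"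
    and b: "b \<in> Z1 L"
    and h: "cosimp_hom Fcs L h"
    and hb: "h 1 (gen 1) = b"
  shows
    "cosimp_group Fplus \<and> cosimp_group (Lb L b) \<and>
     cosimp_hom Fcs Fplus iota_plus \<and> cosimp_hom L (Lb L b) (iota L) \<and>
     cosimp_hom Fplus (Lb L b) (idstar L h) \<and>
     (\<forall>n. \<forall>x\<in>carrier (obj Fcs n). idstar L h n (iota_plus n x) = iota L n (h n x)) \<and>
     (\<forall>(M :: 'm cosimp) f g.
        cosimp_group M \<and> cosimp_hom Fplus M f \<and> cosimp_hom L M g \<and>
        (\<forall>n. \<forall>x\<in>carrier (obj Fcs n). f n (iota_plus n x) = g n (h n x)) \<longrightarrow>
        (\<exists>u. cosimp_hom (Lb L b) M u \<and>
             (\<forall>n. \<forall>x\<in>carrier (obj Fplus n). u n (idstar L h n x) = f n x) \<and>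
             (\<forall>n. \<forall>x\<in>carrier (obj L n). u n (iota L n x) = g n x) \<and>
             (\<forall>u'. cosimp_hom (Lb L b) M u' \<and>
                   (\<forall>n. \<forall>x\<in>carrier (obj Fplus n). u' n (idstar L h n x) = f n x) \<and>
                   (\<forall>n. \<forall>x\<in>carrier (obj L n). u' n (iota L n x) = g n x) \<longrightarrow>
                   (\<forall>n. \<forall>x\<in>carrier (obj (Lb L b) n). u' n x = u n x))))"
proof (intro conjI)
  show "cosimp_group Fplus" unfolding Fplus_eq by (rule cosimp_group_Lb[OF cosimp_group_Fcs gen1_Z1])
  show "cosimp_group (Lb L b)" by (rule cosimp_group_Lb[OF L b])
  show "cosimp_hom Fcs Fplus iota_plus" unfolding Fplus_eq iota_plus_def
    by (rule cosimp_hom_iota[OF cosimp_group_Fcs gen1_Z1])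
  show "cosimp_hom L (Lb L b) (iota L)" by (rule cosimp_hom_iota[OF L b])
  show "cosimp_hom Fplus (Lb L b) (idstar L h)" by (rule idstar_chom[OF L b h hb])
  show "\<forall>n. \<forall>x\<in>carrier (obj Fcs n). idstar L h n (iota_plus n x) = iota L n (h n x)"
    using idstar_I[OF L b h hb] by (simp add: iota_plus_def iota_def I_def del: Fcs_simps)
  show "\<forall>(M :: 'm cosimp) f g.
        cosimp_group M \<and> cosimp_hom Fplus M f \<and> cosimp_hom L M g \<and>
        (\<forall>n. \<forall>x\<in>carrier (obj Fcs n). f n (iota_plus n x) = g n (h n x)) \<longrightarrow>
        (\<exists>u. cosimp_hom (Lb L b) M u \<and>
             (\<forall>n. \<forall>x\<in>carrier (obj Fplus n). u n (idstar L h n x) = f n x) \<and>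
             (\<forall>n. \<forall>x\<in>carrier (obj L n). u n (iota L n x) = g n x) \<and>
             (\<forall>u'. cosimp_hom (Lb L b) M u' \<and>
                   (\<forall>n. \<forall>x\<in>carrier (obj Fplus n). u' n (idstar L h n x) = f n x) \<and>
                   (\<forall>n. \<forall>x\<in>carrier (obj L n). u' n (iota L n x) = g n x) \<longrightarrow>
                   (\<forall>n. \<forall>x\<in>carrier (obj (Lb L b) n). u' n x = u n x)))"
  proof (intro allI impI)
    fix M :: "'m cosimp" and f g
    assume a: "cosimp_group M \<and> cosimp_hom Fplus M f \<and> cosimp_hom L M g \<and>
        (\<forall>n. \<forall>x\<in>carrier (obj Fcs n). f n (iota_plus n x) = g n (h n x))"
    then have M: "cosimp_group M" and f: "cosimp_hom Fplus M f" and g: "cosimp_hom L M g"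
      and fg: "\<forall>n. \<forall>x\<in>carrier (obj Fcs n). f n (iota_plus n x) = g n (h n x)" by auto
    show "\<exists>u. cosimp_hom (Lb L b) M u \<and>
             (\<forall>n. \<forall>x\<in>carrier (obj Fplus n). u n (idstar L h n x) = f n x) \<and>
             (\<forall>n. \<forall>x\<in>carrier (obj L n). u n (iota L n x) = g n x) \<and>
             (\<forall>u'. cosimp_hom (Lb L b) M u' \<and>
                   (\<forall>n. \<forall>x\<in>carrier (obj Fplus n). u' n (idstar L h n x) = f n x) \<and>
                   (\<forall>n. \<forall>x\<in>carrier (obj L n). u' n (iota L n x) = g n x) \<longrightarrow>
                   (\<forall>n. \<forall>x\<in>carrier (obj (Lb L b) n). u' n x = u n x))"
    proof (intro exI conjI allI ballI impI)
      show "cosimp_hom (Lb L b) M (uu M f g)" by (rule u_chom[OF L b h hb M f g fg])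
      show "\<And>n x. x \<in> carrier (obj Fplus n) \<Longrightarrow> uu M f g n (idstar L h n x) = f n x"
        by (rule u_idstar[OF L b h hb M f g fg])
      show "\<And>n x. x \<in> carrier (obj L n) \<Longrightarrow> uu M f g n (iota L n x) = g n x"
        by (rule u_iota[OF L b h hb M f g fg])
      show "\<And>u' n x. cosimp_hom (Lb L b) M u' \<and>
                   (\<forall>n. \<forall>x\<in>carrier (obj Fplus n). u' n (idstar L h n x) = f n x) \<and>
                   (\<forall>n. \<forall>x\<in>carrier (obj L n). u' n (iota L n x) = g n x) \<Longrightarrow>
                   x \<in> carrier (obj (Lb L b) n) \<Longrightarrow> u' n x = uu M f g n x"
        using u_unique[OF L b h hb M f g fg] by blast
    qed
  qed
qed


end
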